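(* Let $T$ be an Artin algebra, $X$ an indecomposable left $T$-module and $n\geq1$ an integer. Let $B_n'$ be the algebra of $n\times n$ upper triangular matrices with entries in $T$, $$B_n'=\begin{pmatrix} T&T&\cdots&T\\ 0&T&\cdots&T\\ \vdots&\vdots&\ddots&\vdots\\ 0&0&\cdots&T\end{pmatrix},$$ and let $M_n$ be the column $\begin{pmatrix}T\\ \vdots\\ T\end{pmatrix}$ with $n$ rows, with left $B_n'$-action and right $T$-action given by matrix multiplication. Then $M_n\otimes_TX$ is an indecomposable left $B_n'$-module.
   Context: Standard notions only: Artin algebras, tensor products of bimodules and modules. *)

theory Defs
  imports "HOL-Algebra.Algebra"
begin

text \<open>HOL-Algebra's locale module requires a commutative ring; we mirror its
axioms for a left module over an arbitrary ring.\<close>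

definition left_module :: "('a, 'c) ring_scheme \<Rightarrow> ('a, 'b, 'd) module_scheme \<Rightarrow> bool" where
  "left_module R M \<longleftrightarrow> ring R \<and> abelian_group M \<and>
     (\<forall>a\<in>carrier R. \<forall>x\<in>carrier M. a \<odot>\<^bsub>M\<^esub> x \<in> carrier M) \<and>
     (\<forall>a\<in>carrier R. \<forall>b\<in>carrier R. \<forall>x\<in>carrier M.
        (a \<oplus>\<^bsub>R\<^esub> b) \<odot>\<^bsub>M\<^esub> x = a \<odot>\<^bsub>M\<^esub> x \<oplus>\<^bsub>M\<^esub> b \<odot>\<^bsub>M\<^esub> x) \<and>
     (\<forall>a\<in>carrier R. \<forall>x\<in>carrier M. \<forall>y\<in>carrier M.
        a \<odot>\<^bsub>M\<^esub> (x \<oplus>\<^bsub>M\<^esub> y) = a \<odot>\<^bsub>M\<^esub> x \<oplus>\<^bsub>M\<^esub> a \<odot>\<^bsub>M\<^esub> y) \<and>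
     (\<forall>a\<in>carrier R. \<forall>b\<in>carrier R. \<forall>x\<in>carrier M.
        (a \<otimes>\<^bsub>R\<^esub> b) \<odot>\<^bsub>M\<^esub> x = a \<odot>\<^bsub>M\<^esub> (b \<odot>\<^bsub>M\<^esub> x)) \<and>
     (\<forall>x\<in>carrier M. \<one>\<^bsub>R\<^esub> \<odot>\<^bsub>M\<^esub> x = x)"

definition finitely_generated_module :: "('a, 'c) ring_scheme \<Rightarrow> ('a, 'b, 'd) module_scheme \<Rightarrow> bool" where
  "finitely_generated_module R M \<longleftrightarrow>
     (\<exists>S. finite S \<and> S \<subseteq> carrier M \<and>
        (\<forall>x\<in>carrier M. \<exists>c\<in>S \<rightarrow> carrier R. x = (\<Oplus>\<^bsub>M\<^esub> s\<in>S. c s \<odot>\<^bsub>M\<^esub> s)))"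

definition indecomposable_module :: "('a, 'c) ring_scheme \<Rightarrow> ('a, 'b, 'd) module_scheme \<Rightarrow> bool" where
  "indecomposable_module R M \<longleftrightarrow> left_module R M \<and> carrier M \<noteq> {\<zero>\<^bsub>M\<^esub>} \<and>
     (\<forall>U V. submodule U R M \<and> submodule V R M \<and> U \<inter> V = {\<zero>\<^bsub>M\<^esub>} \<and>
            set_add M U V = carrier M \<longrightarrow> U = {\<zero>\<^bsub>M\<^esub>} \<or> V = {\<zero>\<^bsub>M\<^esub>})"

definition artinian_cring :: "('r, 'c) ring_scheme \<Rightarrow> bool" where
  "artinian_cring R \<longleftrightarrow> cring R \<and>
     (\<forall>I :: nat \<Rightarrow> 'r set. (\<forall>k. ideal (I k) R) \<and> (\<forall>k. I (Suc k) \<subseteq> I k) \<longrightarrow>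
        (\<exists>N. \<forall>k\<ge>N. I k = I N))"

definition artin_algebra :: "('r, 'c) ring_scheme \<Rightarrow> ('r \<Rightarrow> 'a) \<Rightarrow> ('a, 'e) ring_scheme \<Rightarrow> bool" where
  "artin_algebra R \<phi> T \<longleftrightarrow> artinian_cring R \<and> ring T \<and> \<phi> \<in> ring_hom R T \<and>
     (\<forall>r\<in>carrier R. \<forall>t\<in>carrier T. \<phi> r \<otimes>\<^bsub>T\<^esub> t = t \<otimes>\<^bsub>T\<^esub> \<phi> r) \<and>
     (\<exists>S. finite S \<and> S \<subseteq> carrier T \<and>
        (\<forall>t\<in>carrier T. \<exists>c\<in>S \<rightarrow> carrier R. t = (\<Oplus>\<^bsub>T\<^esub> s\<in>S. \<phi> (c s) \<otimes>\<^bsub>T\<^esub> s)))"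

text \<open>n x n upper triangular matrices over T, indices 0..n-1, entries outside
{(i,j). i <= j < n} are zero.\<close>

definition upper_tri :: "('a, 'e) ring_scheme \<Rightarrow> nat \<Rightarrow> (nat \<Rightarrow> nat \<Rightarrow> 'a) ring" where
  "upper_tri T n = \<lparr>
     carrier = {A. (\<forall>i j. A i j \<in> carrier T) \<and> (\<forall>i j. \<not> (i \<le> j \<and> j < n) \<longrightarrow> A i j = \<zero>\<^bsub>T\<^esub>)},
     monoid.mult = (\<lambda>A B i j. if i \<le> j \<and> j < n then (\<Oplus>\<^bsub>T\<^esub> k\<in>{..<n}. A i k \<otimes>\<^bsub>T\<^esub> B k j) else \<zero>\<^bsub>T\<^esub>),
     monoid.one = (\<lambda>i j. if i = j \<and> j < n then \<one>\<^bsub>T\<^esub> else \<zero>\<^bsub>T\<^esub>),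
     ring.zero = (\<lambda>i j. \<zero>\<^bsub>T\<^esub>),
     ring.add = (\<lambda>A B i j. A i j \<oplus>\<^bsub>T\<^esub> B i j) \<rparr>"

text \<open>The column M_n = T^n (entries with index >= n are zero) as an abelian group
with the left action of upper_tri T n by matrix multiplication.
Its multiplicative ring fields are irrelevant.\<close>

definition column_module :: "('a, 'e) ring_scheme \<Rightarrow> nat \<Rightarrow> (nat \<Rightarrow> nat \<Rightarrow> 'a, nat \<Rightarrow> 'a) module" where
  "column_module T n = \<lparr>
     carrier = {v. (\<forall>i. v i \<in> carrier T) \<and> (\<forall>i\<ge>n. v i = \<zero>\<^bsub>T\<^esub>)},
     monoid.mult = (\<lambda>v w. undefined),
     monoid.one = undefined,
     ring.zero = (\<lambda>i. \<zero>\<^bsub>T\<^esub>),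
     ring.add = (\<lambda>v w i. v i \<oplus>\<^bsub>T\<^esub> w i),
     module.smult = (\<lambda>A v i. if i < n then (\<Oplus>\<^bsub>T\<^esub> k\<in>{..<n}. A i k \<otimes>\<^bsub>T\<^esub> v k) else \<zero>\<^bsub>T\<^esub>) \<rparr>"

definition column_ract :: "('a, 'e) ring_scheme \<Rightarrow> (nat \<Rightarrow> 'a) \<Rightarrow> 'a \<Rightarrow> (nat \<Rightarrow> 'a)" where
  "column_ract T v t = (\<lambda>i. v i \<otimes>\<^bsub>T\<^esub> t)"

text \<open>M tensor_T N is the free abelian group on
carrier M x carrier N modulo the subgroup generated by the bilinearity and
balancing relations; B acts via b (m tensor x) = (b m) tensor x.\<close>

definition tensor_free :: "('b, 'm, 'd) module_scheme \<Rightarrow> ('a, 'x, 'f) module_scheme \<Rightarrow> ('m \<times> 'x \<Rightarrow>\<^sub>0 int) monoid" where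
  "tensor_free M N = free_Abelian_group (carrier M \<times> carrier N)"

definition tensor_relations ::
  "('a, 'e) ring_scheme \<Rightarrow> ('b, 'm, 'd) module_scheme \<Rightarrow> ('m \<Rightarrow> 'a \<Rightarrow> 'm) \<Rightarrow> ('a, 'x, 'f) module_scheme
     \<Rightarrow> ('m \<times> 'x \<Rightarrow>\<^sub>0 int) set" where
  "tensor_relations T M rT N =
     {frag_of (m \<oplus>\<^bsub>M\<^esub> m', x) - frag_of (m, x) - frag_of (m', x) | m m' x.
        m \<in> carrier M \<and> m' \<in> carrier M \<and> x \<in> carrier N} \<union>
     {frag_of (m, x \<oplus>\<^bsub>N\<^esub> x') - frag_of (m, x) - frag_of (m, x') | m x x'.
        m \<in> carrier M \<and> x \<in> carrier N \<and> x' \<in> carrier N} \<union>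
     {frag_of (rT m t, x) - frag_of (m, t \<odot>\<^bsub>N\<^esub> x) | m t x.
        m \<in> carrier M \<and> t \<in> carrier T \<and> x \<in> carrier N}"

definition tensor_kernel ::
  "('a, 'e) ring_scheme \<Rightarrow> ('b, 'm, 'd) module_scheme \<Rightarrow> ('m \<Rightarrow> 'a \<Rightarrow> 'm) \<Rightarrow> ('a, 'x, 'f) module_scheme
     \<Rightarrow> ('m \<times> 'x \<Rightarrow>\<^sub>0 int) set" where
  "tensor_kernel T M rT N = generate (tensor_free M N) (tensor_relations T M rT N)"

definition tensor_act :: "('b, 'm, 'd) module_scheme \<Rightarrow> 'b \<Rightarrow> ('m \<times> 'x \<Rightarrow>\<^sub>0 int) \<Rightarrow> ('m \<times> 'x \<Rightarrow>\<^sub>0 int)" where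
  "tensor_act M b c = frag_extend (\<lambda>(m, x). frag_of (b \<odot>\<^bsub>M\<^esub> m, x)) c"

definition tensor ::
  "('a, 'e) ring_scheme \<Rightarrow> ('b, 'm, 'd) module_scheme \<Rightarrow> ('m \<Rightarrow> 'a \<Rightarrow> 'm) \<Rightarrow> ('a, 'x, 'f) module_scheme
     \<Rightarrow> ('b, ('m \<times> 'x \<Rightarrow>\<^sub>0 int) set) module" where
  "tensor T M rT N =
     (let G = tensor_free M N; K = tensor_kernel T M rT N in
      \<lparr> carrier = carrier (G Mod K),
        monoid.mult = (\<lambda>A B. undefined),
        monoid.one = undefined,
        ring.zero = \<one>\<^bsub>G Mod K\<^esub>,
        ring.add = (\<lambda>A B. A \<otimes>\<^bsub>G Mod K\<^esub> B),
        module.smult = (\<lambda>b A. K <#>\<^bsub>G\<^esub> (tensor_act M b ` A)) \<rparr>)"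

end

theory Submission
  imports Defs
begin
lemma (in ring) finsum_swap:
  assumes "finite A" "finite B" "\<And>a b. a \<in> A \<Longrightarrow> b \<in> B \<Longrightarrow> f a b \<in> carrier R"
  shows "(\<Oplus>a\<in>A. \<Oplus>b\<in>B. f a b) = (\<Oplus>b\<in>B. \<Oplus>a\<in>A. f a b)"
  using assms
proof (induction A rule: finite_induct)
  case empty
  then show ?case by (simp add: finsum_zero)
next
  case (insert x F)
  have "(\<Oplus>a\<in>insert x F. \<Oplus>b\<in>B. f a b) = (\<Oplus>b\<in>B. f x b) \<oplus> (\<Oplus>a\<in>F. \<Oplus>b\<in>B. f a b)"
    using insert by (intro finsum_insert) (auto intro!: finsum_closed)
  also have "\<dots> = (\<Oplus>b\<in>B. f x b) \<oplus> (\<Oplus>b\<in>B. \<Oplus>a\<in>F. f a b)"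
    using insert by simp
  also have "\<dots> = (\<Oplus>b\<in>B. f x b \<oplus> (\<Oplus>a\<in>F. f a b))"
    using insert by (intro finsum_addf[symmetric]) (auto intro!: finsum_closed)
  also have "\<dots> = (\<Oplus>b\<in>B. \<Oplus>a\<in>insert x F. f a b)"
    using insert by (intro finsum_cong') (auto intro!: finsum_closed simp: finsum_insert)
  finally show ?case .
qed

lemma (in ring) mat_assoc:
  fixes n :: nat
  assumes "\<And>l. a l \<in> carrier R" "\<And>l k. b l k \<in> carrier R" "\<And>k. c k \<in> carrier R"
  shows "(\<Oplus>k\<in>{..<n}. (\<Oplus>l\<in>{..<n}. a l \<otimes> b l k) \<otimes> c k)
       = (\<Oplus>l\<in>{..<n}. a l \<otimes> (\<Oplus>k\<in>{..<n}. b l k \<otimes> c k))"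
proof -
  have "(\<Oplus>k\<in>{..<n}. (\<Oplus>l\<in>{..<n}. a l \<otimes> b l k) \<otimes> c k)
      = (\<Oplus>k\<in>{..<n}. \<Oplus>l\<in>{..<n}. a l \<otimes> b l k \<otimes> c k)"
  proof -
    have "\<And>k. (\<Oplus>l\<in>{..<n}. a l \<otimes> b l k) \<otimes> c k = (\<Oplus>l\<in>{..<n}. a l \<otimes> b l k \<otimes> c k)"
      by (rule finsum_ldistr) (auto simp: assms)
    then show ?thesis by simp
  qed
  also have "\<dots> = (\<Oplus>l\<in>{..<n}. \<Oplus>k\<in>{..<n}. a l \<otimes> b l k \<otimes> c k)"
    using assms by (intro finsum_swap) auto
  also have "\<dots> = (\<Oplus>l\<in>{..<n}. a l \<otimes> (\<Oplus>k\<in>{..<n}. b l k \<otimes> c k))"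
  proof -
    have "\<And>l. a l \<otimes> (\<Oplus>k\<in>{..<n}. b l k \<otimes> c k) = (\<Oplus>k\<in>{..<n}. a l \<otimes> (b l k \<otimes> c k))"
      by (rule finsum_rdistr) (auto simp: assms)
    then show ?thesis using assms by (simp add: m_assoc)
  qed
  finally show ?thesis .
qed

locale tsetup = T: ring T + X: abelian_group Xm
  for T :: "'a ring" and Xm :: "('a, 'x) module" +
  fixes n :: nat
  assumes lm: "left_module T Xm" and n1: "1 \<le> n"
begin

abbreviation "B \<equiv> upper_tri T n"

definition mm :: "(nat \<Rightarrow> nat \<Rightarrow> 'a) \<Rightarrow> (nat \<Rightarrow> nat \<Rightarrow> 'a) \<Rightarrow> nat \<Rightarrow> nat \<Rightarrow> 'a" where
  "mm A C = (\<lambda>i j. \<Oplus>\<^bsub>T\<^esub> k\<in>{..<n}. A i k \<otimes>\<^bsub>T\<^esub> C k j)"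

lemma carrier_B: "A \<in> carrier B \<longleftrightarrow> (\<forall>i j. A i j \<in> carrier T) \<and> (\<forall>i j. \<not> (i \<le> j \<and> j < n) \<longrightarrow> A i j = \<zero>\<^bsub>T\<^esub>)"
  by (simp add: upper_tri_def)

lemma B_in: "A \<in> carrier B \<Longrightarrow> A i j \<in> carrier T"
  by (simp add: carrier_B)

lemma B_zero: "A \<in> carrier B \<Longrightarrow> \<not> (i \<le> j \<and> j < n) \<Longrightarrow> A i j = \<zero>\<^bsub>T\<^esub>"
  by (simp add: carrier_B)

lemma sum_delta:
  assumes "\<And>k. f k \<in> carrier T"
  shows "(\<Oplus>\<^bsub>T\<^esub> k\<in>{..<n}. if k = i then f k else \<zero>\<^bsub>T\<^esub>) = (if i < n then f i else \<zero>\<^bsub>T\<^esub>)"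
proof (cases "i < n")
  case True
  then show ?thesis using T.finsum_singleton[of i "{..<n}" f] assms
    by (simp add: eq_commute[of _ i])
next
  case False
  then have "(\<Oplus>\<^bsub>T\<^esub> k\<in>{..<n}. if k = i then f k else \<zero>\<^bsub>T\<^esub>) = (\<Oplus>\<^bsub>T\<^esub> k\<in>{..<n}. \<zero>\<^bsub>T\<^esub>)"
    by (intro T.finsum_cong') auto
  then show ?thesis using False by simp
qed

lemma mm_in: "(\<And>i j. A i j \<in> carrier T) \<Longrightarrow> (\<And>i j. C i j \<in> carrier T) \<Longrightarrow> mm A C i j \<in> carrier T"
  unfolding mm_def by (intro T.finsum_closed) auto

lemma mm_ut:
  assumes "A \<in> carrier B" "C \<in> carrier B" "\<not> (i \<le> j \<and> j < n)"
  shows "mm A C i j = \<zero>\<^bsub>T\<^esub>"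
proof -
  have "\<And>k. A i k \<otimes>\<^bsub>T\<^esub> C k j = \<zero>\<^bsub>T\<^esub>"
  proof -
    fix k
    show "A i k \<otimes>\<^bsub>T\<^esub> C k j = \<zero>\<^bsub>T\<^esub>"
    proof (cases "i \<le> k \<and> k < n")
      case True
      then have "\<not> (k \<le> j \<and> j < n)" using assms(3) by auto
      then show ?thesis using assms by (simp add: B_zero B_in)
    next
      case False
      then show ?thesis using assms by (simp add: B_zero B_in)
    qed
  qed
  then show ?thesis unfolding mm_def by simp
qed

lemma B_mult: "A \<in> carrier B \<Longrightarrow> C \<in> carrier B \<Longrightarrow> A \<otimes>\<^bsub>B\<^esub> C = mm A C"
proof (rule ext, rule ext)
  fix i j assume A: "A \<in> carrier B" and C: "C \<in> carrier B"
  show "(A \<otimes>\<^bsub>B\<^esub> C) i j = mm A C i j"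
  proof (cases "i \<le> j \<and> j < n")
    case True
    then show ?thesis by (simp add: upper_tri_def mm_def)
  next
    case False
    then show ?thesis using mm_ut[OF A C False] by (auto simp: upper_tri_def)
  qed
qed

lemma mm_closed: "A \<in> carrier B \<Longrightarrow> C \<in> carrier B \<Longrightarrow> mm A C \<in> carrier B"
proof -
  assume A: "A \<in> carrier B" and C: "C \<in> carrier B"
  have "\<And>i j. mm A C i j \<in> carrier T" using A C by (intro mm_in) (auto simp: B_in)
  moreover have "\<And>i j. \<not> (i \<le> j \<and> j < n) \<Longrightarrow> mm A C i j = \<zero>\<^bsub>T\<^esub>" using A C by (rule mm_ut)
  ultimately show ?thesis unfolding carrier_B by blast
qed

lemma mm_assoc:
  "(\<And>i j. A i j \<in> carrier T) \<Longrightarrow> (\<And>i j. C i j \<in> carrier T) \<Longrightarrow> (\<And>i j. D i j \<in> carrier T)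
   \<Longrightarrow> mm (mm A C) D = mm A (mm C D)"
  unfolding mm_def by (rule ext, rule ext) (rule T.mat_assoc, auto)

lemma B_one: "\<one>\<^bsub>B\<^esub> = (\<lambda>i j. if i = j \<and> j < n then \<one>\<^bsub>T\<^esub> else \<zero>\<^bsub>T\<^esub>)"
  by (simp add: upper_tri_def)

lemma B_add: "A \<oplus>\<^bsub>B\<^esub> C = (\<lambda>i j. A i j \<oplus>\<^bsub>T\<^esub> C i j)"
  by (simp add: upper_tri_def)

lemma B_zero_el: "\<zero>\<^bsub>B\<^esub> = (\<lambda>i j. \<zero>\<^bsub>T\<^esub>)"
  by (simp add: upper_tri_def)

lemma one_closed_B: "\<one>\<^bsub>B\<^esub> \<in> carrier B"
  by (auto simp: carrier_B B_one)

lemma mm_one_l: "A \<in> carrier B \<Longrightarrow> mm \<one>\<^bsub>B\<^esub> A = A"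
proof (rule ext, rule ext)
  fix i j assume A: "A \<in> carrier B"
  have "mm \<one>\<^bsub>B\<^esub> A i j = (\<Oplus>\<^bsub>T\<^esub> k\<in>{..<n}. if k = i then A k j else \<zero>\<^bsub>T\<^esub>)"
    unfolding mm_def B_one using A by (intro T.finsum_cong') (auto simp: B_in)
  also have "\<dots> = A i j" using A by (subst sum_delta) (auto simp: B_in B_zero)
  finally show "mm \<one>\<^bsub>B\<^esub> A i j = A i j" .
qed

lemma mm_one_r: "A \<in> carrier B \<Longrightarrow> mm A \<one>\<^bsub>B\<^esub> = A"
proof (rule ext, rule ext)
  fix i j assume A: "A \<in> carrier B"
  have "mm A \<one>\<^bsub>B\<^esub> i j = (\<Oplus>\<^bsub>T\<^esub> k\<in>{..<n}. if k = j then A i k else \<zero>\<^bsub>T\<^esub>)"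
    unfolding mm_def B_one using A by (intro T.finsum_cong') (auto simp: B_in)
  also have "\<dots> = A i j" using A by (subst sum_delta) (auto simp: B_in B_zero)
  finally show "mm A \<one>\<^bsub>B\<^esub> i j = A i j" .
qed

lemma mm_ldistr:
  assumes "\<And>i j. A i j \<in> carrier T" "\<And>i j. C i j \<in> carrier T" "\<And>i j. D i j \<in> carrier T"
  shows "mm (\<lambda>i j. A i j \<oplus>\<^bsub>T\<^esub> C i j) D = (\<lambda>i j. mm A D i j \<oplus>\<^bsub>T\<^esub> mm C D i j)"
proof (rule ext, rule ext)
  fix i j
  have "mm (\<lambda>i j. A i j \<oplus>\<^bsub>T\<^esub> C i j) D i j = (\<Oplus>\<^bsub>T\<^esub> k\<in>{..<n}. A i k \<otimes>\<^bsub>T\<^esub> D k j \<oplus>\<^bsub>T\<^esub> C i k \<otimes>\<^bsub>T\<^esub> D k j)"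
    unfolding mm_def using assms by (intro T.finsum_cong') (simp_all add: T.l_distr)
  also have "\<dots> = mm A D i j \<oplus>\<^bsub>T\<^esub> mm C D i j"
    unfolding mm_def using assms by (intro T.finsum_addf) auto
  finally show "mm (\<lambda>i j. A i j \<oplus>\<^bsub>T\<^esub> C i j) D i j = mm A D i j \<oplus>\<^bsub>T\<^esub> mm C D i j" .
qed

lemma mm_rdistr:
  assumes "\<And>i j. A i j \<in> carrier T" "\<And>i j. C i j \<in> carrier T" "\<And>i j. D i j \<in> carrier T"
  shows "mm D (\<lambda>i j. A i j \<oplus>\<^bsub>T\<^esub> C i j) = (\<lambda>i j. mm D A i j \<oplus>\<^bsub>T\<^esub> mm D C i j)"
proof (rule ext, rule ext)
  fix i j
  have "mm D (\<lambda>i j. A i j \<oplus>\<^bsub>T\<^esub> C i j) i j = (\<Oplus>\<^bsub>T\<^esub> k\<in>{..<n}. D i k \<otimes>\<^bsub>T\<^esub> A k j \<oplus>\<^bsub>T\<^esub> D i k \<otimes>\<^bsub>T\<^esub> C k j)"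
    unfolding mm_def using assms by (intro T.finsum_cong') (simp_all add: T.r_distr)
  also have "\<dots> = mm D A i j \<oplus>\<^bsub>T\<^esub> mm D C i j"
    unfolding mm_def using assms by (intro T.finsum_addf) auto
  finally show "mm D (\<lambda>i j. A i j \<oplus>\<^bsub>T\<^esub> C i j) i j = mm D A i j \<oplus>\<^bsub>T\<^esub> mm D C i j" .
qed

lemma ring_B: "ring B"
proof (rule ringI)
  show "abelian_group B"
  proof (rule abelian_groupI)
    fix x y z assume x: "x \<in> carrier B" and y: "y \<in> carrier B" and z: "z \<in> carrier B"
    show "x \<oplus>\<^bsub>B\<^esub> y \<in> carrier B" using x y by (auto simp: carrier_B B_add)
    show "x \<oplus>\<^bsub>B\<^esub> y \<oplus>\<^bsub>B\<^esub> z = x \<oplus>\<^bsub>B\<^esub> (y \<oplus>\<^bsub>B\<^esub> z)" using x y z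
      by (auto simp: B_add B_in T.a_assoc)
    show "x \<oplus>\<^bsub>B\<^esub> y = y \<oplus>\<^bsub>B\<^esub> x" using x y by (auto simp: B_add B_in T.a_comm)
    show "\<zero>\<^bsub>B\<^esub> \<oplus>\<^bsub>B\<^esub> x = x" using x by (auto simp: B_add B_zero_el B_in)
    show "\<exists>y\<in>carrier B. y \<oplus>\<^bsub>B\<^esub> x = \<zero>\<^bsub>B\<^esub>"
      using x by (intro bexI[of _ "\<lambda>i j. \<ominus>\<^bsub>T\<^esub> x i j"]) (auto simp: B_add B_zero_el B_in carrier_B T.l_neg)
  next
    show "\<zero>\<^bsub>B\<^esub> \<in> carrier B" by (auto simp: carrier_B B_zero_el)
  qed
next
  show "monoid B"
  proof (rule monoidI)
    fix x y z assume x: "x \<in> carrier B" and y: "y \<in> carrier B" and z: "z \<in> carrier B"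
    show "x \<otimes>\<^bsub>B\<^esub> y \<in> carrier B" using x y by (simp add: B_mult mm_closed)
    show "x \<otimes>\<^bsub>B\<^esub> y \<otimes>\<^bsub>B\<^esub> z = x \<otimes>\<^bsub>B\<^esub> (y \<otimes>\<^bsub>B\<^esub> z)" using x y z
      by (simp add: B_mult mm_closed mm_assoc B_in)
    show "\<one>\<^bsub>B\<^esub> \<otimes>\<^bsub>B\<^esub> x = x" using x by (simp add: B_mult one_closed_B mm_one_l)
    show "x \<otimes>\<^bsub>B\<^esub> \<one>\<^bsub>B\<^esub> = x" using x by (simp add: B_mult one_closed_B mm_one_r)
  next
    show "\<one>\<^bsub>B\<^esub> \<in> carrier B" by (rule one_closed_B)
  qed
next
  fix x y z assume x: "x \<in> carrier B" and y: "y \<in> carrier B" and z: "z \<in> carrier B"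
  have xy: "x \<oplus>\<^bsub>B\<^esub> y \<in> carrier B" using x y by (auto simp: carrier_B B_add)
  have yz: "x \<otimes>\<^bsub>B\<^esub> z \<in> carrier B" "y \<otimes>\<^bsub>B\<^esub> z \<in> carrier B" "z \<otimes>\<^bsub>B\<^esub> x \<in> carrier B" "z \<otimes>\<^bsub>B\<^esub> y \<in> carrier B"
    using x y z by (simp_all add: B_mult mm_closed)
  show "(x \<oplus>\<^bsub>B\<^esub> y) \<otimes>\<^bsub>B\<^esub> z = x \<otimes>\<^bsub>B\<^esub> z \<oplus>\<^bsub>B\<^esub> y \<otimes>\<^bsub>B\<^esub> z"
    using B_mult[OF xy z] B_mult[OF x z] B_mult[OF y z] mm_ldistr[of x y z] x y z
    by (simp add: B_add B_in)
  show "z \<otimes>\<^bsub>B\<^esub> (x \<oplus>\<^bsub>B\<^esub> y) = z \<otimes>\<^bsub>B\<^esub> x \<oplus>\<^bsub>B\<^esub> z \<otimes>\<^bsub>B\<^esub> y"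
    using B_mult[OF z xy] B_mult[OF z x] B_mult[OF z y] mm_rdistr[of x y z] x y z
    by (simp add: B_add B_in)
qed

end

context tsetup begin

abbreviation "Mc \<equiv> column_module T n"

lemma carrier_Mc: "v \<in> carrier Mc \<longleftrightarrow> (\<forall>i. v i \<in> carrier T) \<and> (\<forall>i\<ge>n. v i = \<zero>\<^bsub>T\<^esub>)"
  by (simp add: column_module_def)

lemma Mc_in: "v \<in> carrier Mc \<Longrightarrow> v i \<in> carrier T"
  by (simp add: carrier_Mc)

lemma Mc_zero: "v \<in> carrier Mc \<Longrightarrow> n \<le> i \<Longrightarrow> v i = \<zero>\<^bsub>T\<^esub>"
  by (simp add: carrier_Mc)

lemma Mc_add: "v \<oplus>\<^bsub>Mc\<^esub> w = (\<lambda>i. v i \<oplus>\<^bsub>T\<^esub> w i)"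
  by (simp add: column_module_def)

lemma Mc_zero_el: "\<zero>\<^bsub>Mc\<^esub> = (\<lambda>i. \<zero>\<^bsub>T\<^esub>)"
  by (simp add: column_module_def)

lemma Mc_smult_def: "A \<odot>\<^bsub>Mc\<^esub> v = (\<lambda>i. if i < n then (\<Oplus>\<^bsub>T\<^esub> k\<in>{..<n}. A i k \<otimes>\<^bsub>T\<^esub> v k) else \<zero>\<^bsub>T\<^esub>)"
  by (simp add: column_module_def)

definition mv :: "(nat \<Rightarrow> nat \<Rightarrow> 'a) \<Rightarrow> (nat \<Rightarrow> 'a) \<Rightarrow> nat \<Rightarrow> 'a" where
  "mv A v = (\<lambda>i. \<Oplus>\<^bsub>T\<^esub> k\<in>{..<n}. A i k \<otimes>\<^bsub>T\<^esub> v k)"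

lemma mv_in: "(\<And>i j. A i j \<in> carrier T) \<Longrightarrow> (\<And>i. v i \<in> carrier T) \<Longrightarrow> mv A v i \<in> carrier T"
  unfolding mv_def by (intro T.finsum_closed) auto

lemma Mc_smult: 
  assumes A: "A \<in> carrier B" and v: "v \<in> carrier Mc"
  shows "A \<odot>\<^bsub>Mc\<^esub> v = mv A v"
proof (rule ext)
  fix i
  show "(A \<odot>\<^bsub>Mc\<^esub> v) i = mv A v i"
  proof (cases "i < n")
    case True
    then show ?thesis by (simp add: Mc_smult_def mv_def)
  next
    case False
    then have "\<And>k. A i k \<otimes>\<^bsub>T\<^esub> v k = \<zero>\<^bsub>T\<^esub>"
      using A v by (simp add: B_zero Mc_in)
    then show ?thesis using False by (simp add: Mc_smult_def mv_def)
  qed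
qed

lemma smult_closed_Mc:
  assumes A: "A \<in> carrier B" and v: "v \<in> carrier Mc"
  shows "A \<odot>\<^bsub>Mc\<^esub> v \<in> carrier Mc"
  using A v unfolding carrier_Mc Mc_smult_def
  by (auto intro!: T.finsum_closed simp: B_in)

lemma add_closed_Mc: "v \<in> carrier Mc \<Longrightarrow> w \<in> carrier Mc \<Longrightarrow> v \<oplus>\<^bsub>Mc\<^esub> w \<in> carrier Mc"
  by (auto simp: carrier_Mc Mc_add)

lemma zero_closed_Mc: "\<zero>\<^bsub>Mc\<^esub> \<in> carrier Mc"
  by (auto simp: carrier_Mc Mc_zero_el)

lemma ract_closed: "v \<in> carrier Mc \<Longrightarrow> t \<in> carrier T \<Longrightarrow> column_ract T v t \<in> carrier Mc"
  by (auto simp: carrier_Mc column_ract_def)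

lemma Mc_r_distr:
  assumes A: "A \<in> carrier B" and v: "v \<in> carrier Mc" and w: "w \<in> carrier Mc"
  shows "A \<odot>\<^bsub>Mc\<^esub> (v \<oplus>\<^bsub>Mc\<^esub> w) = A \<odot>\<^bsub>Mc\<^esub> v \<oplus>\<^bsub>Mc\<^esub> A \<odot>\<^bsub>Mc\<^esub> w"
proof -
  have "\<And>i. mv A (\<lambda>i. v i \<oplus>\<^bsub>T\<^esub> w i) i = mv A v i \<oplus>\<^bsub>T\<^esub> mv A w i"
  proof -
    fix i
    have "mv A (\<lambda>i. v i \<oplus>\<^bsub>T\<^esub> w i) i = (\<Oplus>\<^bsub>T\<^esub> k\<in>{..<n}. A i k \<otimes>\<^bsub>T\<^esub> v k \<oplus>\<^bsub>T\<^esub> A i k \<otimes>\<^bsub>T\<^esub> w k)"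
      unfolding mv_def using A v w by (intro T.finsum_cong') (simp_all add: T.r_distr B_in Mc_in)
    also have "\<dots> = mv A v i \<oplus>\<^bsub>T\<^esub> mv A w i"
      unfolding mv_def using A v w by (intro T.finsum_addf) (auto simp: B_in Mc_in)
    finally show "mv A (\<lambda>i. v i \<oplus>\<^bsub>T\<^esub> w i) i = mv A v i \<oplus>\<^bsub>T\<^esub> mv A w i" .
  qed
  then show ?thesis
    using Mc_smult[OF A add_closed_Mc[OF v w]] Mc_smult[OF A v] Mc_smult[OF A w]
    by (simp add: Mc_add fun_eq_iff)
qed

lemma Mc_l_distr:
  assumes A: "A \<in> carrier B" and C: "C \<in> carrier B" and v: "v \<in> carrier Mc"
  shows "(A \<oplus>\<^bsub>B\<^esub> C) \<odot>\<^bsub>Mc\<^esub> v = A \<odot>\<^bsub>Mc\<^esub> v \<oplus>\<^bsub>Mc\<^esub> C \<odot>\<^bsub>Mc\<^esub> v"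
proof -
  have AC: "A \<oplus>\<^bsub>B\<^esub> C \<in> carrier B" using A C ring.ring_simprules(1)[OF ring_B] by blast
  have "\<And>i. mv (\<lambda>i j. A i j \<oplus>\<^bsub>T\<^esub> C i j) v i = mv A v i \<oplus>\<^bsub>T\<^esub> mv C v i"
  proof -
    fix i
    have "mv (\<lambda>i j. A i j \<oplus>\<^bsub>T\<^esub> C i j) v i = (\<Oplus>\<^bsub>T\<^esub> k\<in>{..<n}. A i k \<otimes>\<^bsub>T\<^esub> v k \<oplus>\<^bsub>T\<^esub> C i k \<otimes>\<^bsub>T\<^esub> v k)"
      unfolding mv_def using A C v by (intro T.finsum_cong') (simp_all add: T.l_distr B_in Mc_in)
    also have "\<dots> = mv A v i \<oplus>\<^bsub>T\<^esub> mv C v i"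
      unfolding mv_def using A C v by (intro T.finsum_addf) (auto simp: B_in Mc_in)
    finally show "mv (\<lambda>i j. A i j \<oplus>\<^bsub>T\<^esub> C i j) v i = mv A v i \<oplus>\<^bsub>T\<^esub> mv C v i" .
  qed
  then show ?thesis
    using Mc_smult[OF AC v] Mc_smult[OF A v] Mc_smult[OF C v]
    by (simp add: Mc_add B_add fun_eq_iff)
qed

lemma Mc_assoc:
  assumes A: "A \<in> carrier B" and C: "C \<in> carrier B" and v: "v \<in> carrier Mc"
  shows "(A \<otimes>\<^bsub>B\<^esub> C) \<odot>\<^bsub>Mc\<^esub> v = A \<odot>\<^bsub>Mc\<^esub> (C \<odot>\<^bsub>Mc\<^esub> v)"
proof -
  have AC: "A \<otimes>\<^bsub>B\<^esub> C \<in> carrier B" using A C by (simp add: B_mult mm_closed)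
  have "mv (mm A C) v = mv A (mv C v)"
    unfolding mv_def mm_def using A C v by (intro ext T.mat_assoc) (auto simp: B_in Mc_in)
  then show ?thesis
    using Mc_smult[OF AC v] Mc_smult[OF A smult_closed_Mc[OF C v]] Mc_smult[OF C v] B_mult[OF A C]
    by simp
qed

lemma Mc_one:
  assumes v: "v \<in> carrier Mc"
  shows "\<one>\<^bsub>B\<^esub> \<odot>\<^bsub>Mc\<^esub> v = v"
proof (rule ext)
  fix i
  have "mv \<one>\<^bsub>B\<^esub> v i = (\<Oplus>\<^bsub>T\<^esub> k\<in>{..<n}. if k = i then v k else \<zero>\<^bsub>T\<^esub>)"
    unfolding mv_def B_one using v by (intro T.finsum_cong') (auto simp: Mc_in)
  also have "\<dots> = v i" using v by (subst sum_delta) (auto simp: Mc_in Mc_zero)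
  finally show "(\<one>\<^bsub>B\<^esub> \<odot>\<^bsub>Mc\<^esub> v) i = v i" using Mc_smult[OF one_closed_B v] by simp
qed

lemma Mc_ract:
  assumes A: "A \<in> carrier B" and v: "v \<in> carrier Mc" and t: "t \<in> carrier T"
  shows "A \<odot>\<^bsub>Mc\<^esub> column_ract T v t = column_ract T (A \<odot>\<^bsub>Mc\<^esub> v) t"
proof (rule ext)
  fix i
  have "mv A (\<lambda>i. v i \<otimes>\<^bsub>T\<^esub> t) i = (\<Oplus>\<^bsub>T\<^esub> k\<in>{..<n}. A i k \<otimes>\<^bsub>T\<^esub> v k \<otimes>\<^bsub>T\<^esub> t)"
    unfolding mv_def using A v t by (intro T.finsum_cong') (simp_all add: T.m_assoc B_in Mc_in)
  also have "\<dots> = mv A v i \<otimes>\<^bsub>T\<^esub> t"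
    unfolding mv_def using A v t by (intro T.finsum_ldistr[symmetric]) (auto simp: B_in Mc_in)
  finally show "(A \<odot>\<^bsub>Mc\<^esub> column_ract T v t) i = column_ract T (A \<odot>\<^bsub>Mc\<^esub> v) t i"
    using Mc_smult[OF A ract_closed[OF v t]] Mc_smult[OF A v]
    by (simp add: column_ract_def)
qed

end

context tsetup begin

abbreviation "S \<equiv> carrier Mc \<times> carrier Xm"
abbreviation "G \<equiv> tensor_free Mc Xm"
abbreviation "Rel \<equiv> tensor_relations T Mc (column_ract T) Xm"
abbreviation "K \<equiv> tensor_kernel T Mc (column_ract T) Xm"
abbreviation "Tens \<equiv> tensor T Mc (column_ract T) Xm"

lemma G_eq: "G = free_Abelian_group S"
  by (simp add: tensor_free_def)

lemma carrier_G: "c \<in> carrier G \<longleftrightarrow> Poly_Mapping.keys c \<subseteq> S"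
  by (simp add: G_eq)

lemma G_diff: "c \<in> carrier G \<Longrightarrow> d \<in> carrier G \<Longrightarrow> c - d \<in> carrier G"
  unfolding carrier_G by (intro order.trans[OF keys_diff] Un_least)

lemma G_add: "c \<in> carrier G \<Longrightarrow> d \<in> carrier G \<Longrightarrow> c + d \<in> carrier G"
  unfolding carrier_G by (intro order.trans[OF keys_add] Un_least)

lemma G_minus: "c \<in> carrier G \<Longrightarrow> - c \<in> carrier G"
  unfolding carrier_G by simp

lemma G_frag: "m \<in> carrier Mc \<Longrightarrow> x \<in> carrier Xm \<Longrightarrow> frag_of (m, x) \<in> carrier G"
  unfolding carrier_G by (simp add: keys_frag_of)

lemma group_G: "group G" by (simp add: G_eq)
lemma comm_group_G: "comm_group G" by (simp add: G_eq abelian_free_Abelian_group)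
lemma G_mult: "c \<otimes>\<^bsub>G\<^esub> d = c + d" by (simp add: G_eq)
lemma G_one: "\<one>\<^bsub>G\<^esub> = 0" by (simp add: G_eq)
lemma G_inv: "c \<in> carrier G \<Longrightarrow> inv\<^bsub>G\<^esub> c = - c" by (simp add: G_eq)

lemma X_smult_closed: "a \<in> carrier T \<Longrightarrow> x \<in> carrier Xm \<Longrightarrow> a \<odot>\<^bsub>Xm\<^esub> x \<in> carrier Xm"
  using lm unfolding left_module_def by blast
lemma X_l_distr: "a \<in> carrier T \<Longrightarrow> b \<in> carrier T \<Longrightarrow> x \<in> carrier Xm \<Longrightarrow>
   (a \<oplus>\<^bsub>T\<^esub> b) \<odot>\<^bsub>Xm\<^esub> x = a \<odot>\<^bsub>Xm\<^esub> x \<oplus>\<^bsub>Xm\<^esub> b \<odot>\<^bsub>Xm\<^esub> x"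
  using lm unfolding left_module_def by blast
lemma X_r_distr: "a \<in> carrier T \<Longrightarrow> x \<in> carrier Xm \<Longrightarrow> y \<in> carrier Xm \<Longrightarrow>
   a \<odot>\<^bsub>Xm\<^esub> (x \<oplus>\<^bsub>Xm\<^esub> y) = a \<odot>\<^bsub>Xm\<^esub> x \<oplus>\<^bsub>Xm\<^esub> a \<odot>\<^bsub>Xm\<^esub> y"
  using lm unfolding left_module_def by blast
lemma X_assoc: "a \<in> carrier T \<Longrightarrow> b \<in> carrier T \<Longrightarrow> x \<in> carrier Xm \<Longrightarrow>
   (a \<otimes>\<^bsub>T\<^esub> b) \<odot>\<^bsub>Xm\<^esub> x = a \<odot>\<^bsub>Xm\<^esub> (b \<odot>\<^bsub>Xm\<^esub> x)"
  using lm unfolding left_module_def by blast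
lemma X_one: "x \<in> carrier Xm \<Longrightarrow> \<one>\<^bsub>T\<^esub> \<odot>\<^bsub>Xm\<^esub> x = x"
  using lm unfolding left_module_def by blast

lemma X_zero_smult: "x \<in> carrier Xm \<Longrightarrow> \<zero>\<^bsub>T\<^esub> \<odot>\<^bsub>Xm\<^esub> x = \<zero>\<^bsub>Xm\<^esub>"
proof -
  assume x: "x \<in> carrier Xm"
  define z where "z = \<zero>\<^bsub>T\<^esub> \<odot>\<^bsub>Xm\<^esub> x"
  have c: "z \<in> carrier Xm" using x by (simp add: X_smult_closed z_def)
  have e: "\<zero>\<^bsub>T\<^esub> \<oplus>\<^bsub>T\<^esub> \<zero>\<^bsub>T\<^esub> = \<zero>\<^bsub>T\<^esub>" by simp
  have "z = z \<oplus>\<^bsub>Xm\<^esub> z"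
    using X_l_distr[OF T.zero_closed T.zero_closed x] unfolding e z_def[symmetric] .
  then have "z \<oplus>\<^bsub>Xm\<^esub> z = z \<oplus>\<^bsub>Xm\<^esub> \<zero>\<^bsub>Xm\<^esub>"
    by (subst X.r_zero[OF c]) (rule sym)
  then have "z = \<zero>\<^bsub>Xm\<^esub>" by (rule X.add.l_cancel) (use c in simp_all)
  then show ?thesis by (simp add: z_def)
qed

lemma X_smult_zero: "a \<in> carrier T \<Longrightarrow> a \<odot>\<^bsub>Xm\<^esub> \<zero>\<^bsub>Xm\<^esub> = \<zero>\<^bsub>Xm\<^esub>"
proof -
  assume a: "a \<in> carrier T"
  define z where "z = a \<odot>\<^bsub>Xm\<^esub> \<zero>\<^bsub>Xm\<^esub>"
  have c: "z \<in> carrier Xm" using a by (simp add: X_smult_closed z_def)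
  have e: "\<zero>\<^bsub>Xm\<^esub> \<oplus>\<^bsub>Xm\<^esub> \<zero>\<^bsub>Xm\<^esub> = \<zero>\<^bsub>Xm\<^esub>" by simp
  have "z = z \<oplus>\<^bsub>Xm\<^esub> z"
    using X_r_distr[OF a X.zero_closed X.zero_closed] unfolding e z_def[symmetric] .
  then have "z \<oplus>\<^bsub>Xm\<^esub> z = z \<oplus>\<^bsub>Xm\<^esub> \<zero>\<^bsub>Xm\<^esub>"
    by (subst X.r_zero[OF c]) (rule sym)
  then have "z = \<zero>\<^bsub>Xm\<^esub>" by (rule X.add.l_cancel) (use c in simp_all)
  then show ?thesis by (simp add: z_def)
qed

lemma X_cancel3: "y \<in> carrier Xm \<Longrightarrow> z \<in> carrier Xm \<Longrightarrow> (y \<oplus>\<^bsub>Xm\<^esub> z) \<ominus>\<^bsub>Xm\<^esub> y \<ominus>\<^bsub>Xm\<^esub> z = \<zero>\<^bsub>Xm\<^esub>"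
proof -
  assume y: "y \<in> carrier Xm" and z: "z \<in> carrier Xm"
  have "(y \<oplus>\<^bsub>Xm\<^esub> z) \<ominus>\<^bsub>Xm\<^esub> y \<ominus>\<^bsub>Xm\<^esub> z = (y \<oplus>\<^bsub>Xm\<^esub> z) \<oplus>\<^bsub>Xm\<^esub> \<ominus>\<^bsub>Xm\<^esub> (y \<oplus>\<^bsub>Xm\<^esub> z)"
    using y z by (simp add: X.minus_eq X.minus_add X.a_assoc X.r_neg)
  then show ?thesis using y z by (simp add: X.r_neg)
qed

lemma Rel_sub: "Rel \<subseteq> carrier G"
proof -
  have 1: "frag_of (m \<oplus>\<^bsub>Mc\<^esub> m', x) - frag_of (m, x) - frag_of (m', x) \<in> carrier G"
    if "m \<in> carrier Mc" "m' \<in> carrier Mc" "x \<in> carrier Xm" for m m' x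
    using that by (intro G_diff G_frag add_closed_Mc)
  have 2: "frag_of (m, x \<oplus>\<^bsub>Xm\<^esub> x') - frag_of (m, x) - frag_of (m, x') \<in> carrier G"
    if "m \<in> carrier Mc" "x' \<in> carrier Xm" "x \<in> carrier Xm" for m x' x
    using that by (intro G_diff G_frag X.a_closed)
  have 3: "frag_of (column_ract T m t, x) - frag_of (m, t \<odot>\<^bsub>Xm\<^esub> x) \<in> carrier G"
    if "m \<in> carrier Mc" "t \<in> carrier T" "x \<in> carrier Xm" for m t x
    using that by (intro G_diff G_frag ract_closed X_smult_closed)
  show ?thesis unfolding tensor_relations_def
    by (intro Un_least) (auto intro: 1 2 3)
qed

lemma K_def': "K = generate G Rel"
  by (simp add: tensor_kernel_def)

lemma K_subgroup: "subgroup K G"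
  unfolding K_def' by (rule group.generate_is_subgroup[OF group_G Rel_sub])

lemma K_sub: "K \<subseteq> carrier G"
  using subgroup.subset[OF K_subgroup] .

lemma K_zero: "0 \<in> K"
  using subgroup.one_closed[OF K_subgroup] by (simp add: G_one)

lemma K_add: "a \<in> K \<Longrightarrow> b \<in> K \<Longrightarrow> a + b \<in> K"
  using subgroup.m_closed[OF K_subgroup] by (simp add: G_mult)

lemma K_minus: "a \<in> K \<Longrightarrow> - a \<in> K"
  using subgroup.m_inv_closed[OF K_subgroup] K_sub G_inv by fastforce

lemma K_diff: "a \<in> K \<Longrightarrow> b \<in> K \<Longrightarrow> a - b \<in> K"
  using K_add[OF _ K_minus] by (metis diff_conv_add_uminus)

lemma K_sum: "finite I \<Longrightarrow> (\<And>i. i \<in> I \<Longrightarrow> f i \<in> K) \<Longrightarrow> sum f I \<in> K"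
  by (induction I rule: finite_induct) (auto intro: K_add K_zero)

lemma K_rel1: "m \<in> carrier Mc \<Longrightarrow> m' \<in> carrier Mc \<Longrightarrow> x \<in> carrier Xm \<Longrightarrow>
  frag_of (m \<oplus>\<^bsub>Mc\<^esub> m', x) - frag_of (m, x) - frag_of (m', x) \<in> K"
  unfolding K_def' by (rule generate.incl) (unfold tensor_relations_def, rule UnI1, rule UnI1, blast)

lemma K_rel2: "m \<in> carrier Mc \<Longrightarrow> x \<in> carrier Xm \<Longrightarrow> x' \<in> carrier Xm \<Longrightarrow>
  frag_of (m, x \<oplus>\<^bsub>Xm\<^esub> x') - frag_of (m, x) - frag_of (m, x') \<in> K"
  unfolding K_def' by (rule generate.incl) (unfold tensor_relations_def, rule UnI1, rule UnI2, blast)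

lemma K_rel3: "m \<in> carrier Mc \<Longrightarrow> t \<in> carrier T \<Longrightarrow> x \<in> carrier Xm \<Longrightarrow>
  frag_of (column_ract T m t, x) - frag_of (m, t \<odot>\<^bsub>Xm\<^esub> x) \<in> K"
  unfolding K_def' by (rule generate.incl) (unfold tensor_relations_def, rule UnI2, blast)

lemma K_frag_zero2: "m \<in> carrier Mc \<Longrightarrow> frag_of (m, \<zero>\<^bsub>Xm\<^esub>) \<in> K"
  using K_minus[OF K_rel2[of m "\<zero>\<^bsub>Xm\<^esub>" "\<zero>\<^bsub>Xm\<^esub>"]] by simp

lemma K_frag_zero1: "x \<in> carrier Xm \<Longrightarrow> frag_of (\<zero>\<^bsub>Mc\<^esub>, x) \<in> K"
  using K_minus[OF K_rel1[of "\<zero>\<^bsub>Mc\<^esub>" "\<zero>\<^bsub>Mc\<^esub>" x]] zero_closed_Mc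
  by (simp add: Mc_add Mc_zero_el)

lemma ext_K:
  assumes "c \<in> carrier G" "\<And>s. s \<in> S \<Longrightarrow> g s \<in> K"
  shows "frag_extend g c \<in> K"
proof (rule free_Abelian_group_induct[where P="\<lambda>c. frag_extend g c \<in> K"])
  show "Poly_Mapping.keys c \<subseteq> S" using assms(1) by (simp add: carrier_G)
next
  show "frag_extend g 0 \<in> K" by (simp add: K_zero)
next
  fix x y assume "Poly_Mapping.keys x \<subseteq> S" "Poly_Mapping.keys y \<subseteq> S" "frag_extend g x \<in> K" "frag_extend g y \<in> K"
  then show "frag_extend g (x - y) \<in> K" by (simp add: frag_extend_diff K_diff)
next
  fix a assume "a \<in> S" then show "frag_extend g (frag_of a) \<in> K" by (simp add: assms(2))
qed

end

context tsetup begin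

definition pj :: "nat \<Rightarrow> ((nat \<Rightarrow> 'a) \<times> 'x \<Rightarrow>\<^sub>0 int) \<Rightarrow> 'x" where
  "pj j = (SOME h. h \<in> hom G (add_monoid Xm) \<and>
              (\<forall>s\<in>S. h (frag_of s) = fst s j \<odot>\<^bsub>Xm\<^esub> snd s))"

lemma pj_ex: "\<exists>h. h \<in> hom G (add_monoid Xm) \<and> (\<forall>s\<in>S. h (frag_of s) = fst s j \<odot>\<^bsub>Xm\<^esub> snd s)"
proof -
  have *: "(\<lambda>s. fst s j \<odot>\<^bsub>Xm\<^esub> snd s) ` S \<subseteq> carrier (add_monoid Xm)"
  proof
    fix y assume "y \<in> (\<lambda>s. fst s j \<odot>\<^bsub>Xm\<^esub> snd s) ` S"
    then obtain m x where "m \<in> carrier Mc" "x \<in> carrier Xm" "y = m j \<odot>\<^bsub>Xm\<^esub> x" by auto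
    then show "y \<in> carrier (add_monoid Xm)" by (simp add: X_smult_closed Mc_in)
  qed
  obtain h where h1: "h \<in> hom (free_Abelian_group S) (add_monoid Xm)"
     and h2: "\<And>s. s \<in> S \<Longrightarrow> h (frag_of s) = fst s j \<odot>\<^bsub>Xm\<^esub> snd s"
    using comm_group.free_Abelian_group_universal[OF X.a_comm_group *] by blast
  show ?thesis using h1 h2 unfolding G_eq by blast
qed

lemma pj_hom: "pj j \<in> hom G (add_monoid Xm)"
  and pj_frag0: "\<forall>s\<in>S. pj j (frag_of s) = fst s j \<odot>\<^bsub>Xm\<^esub> snd s"
  using someI_ex[OF pj_ex[of j]] unfolding pj_def by blast+

lemma pj_frag: "m \<in> carrier Mc \<Longrightarrow> x \<in> carrier Xm \<Longrightarrow> pj j (frag_of (m, x)) = m j \<odot>\<^bsub>Xm\<^esub> x"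
  using pj_frag0[of j] by auto

lemma pj_group_hom: "group_hom G (add_monoid Xm) (pj j)"
  by (intro group_hom.intro group_hom_axioms.intro group_G X.a_group pj_hom)

lemma pj_closed: "c \<in> carrier G \<Longrightarrow> pj j c \<in> carrier Xm"
  using hom_in_carrier[OF pj_hom] by fastforce

lemma pj_add: "c \<in> carrier G \<Longrightarrow> d \<in> carrier G \<Longrightarrow> pj j (c + d) = pj j c \<oplus>\<^bsub>Xm\<^esub> pj j d"
  using hom_mult[OF pj_hom, of c d j] by (simp add: G_mult)

lemma pj_minus: "c \<in> carrier G \<Longrightarrow> pj j (- c) = \<ominus>\<^bsub>Xm\<^esub> pj j c"
  using group_hom.hom_inv[OF pj_group_hom, of c j] by (simp add: G_inv a_inv_def)

lemma pj_diff: "c \<in> carrier G \<Longrightarrow> d \<in> carrier G \<Longrightarrow> pj j (c - d) = pj j c \<ominus>\<^bsub>Xm\<^esub> pj j d"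
proof -
  assume c: "c \<in> carrier G" and d: "d \<in> carrier G"
  have "pj j (c - d) = pj j (c + - d)" by (simp only: diff_conv_add_uminus)
  also have "\<dots> = pj j c \<oplus>\<^bsub>Xm\<^esub> pj j (- d)" by (rule pj_add[OF c G_minus[OF d]])
  also have "\<dots> = pj j c \<ominus>\<^bsub>Xm\<^esub> pj j d" using pj_minus[OF d] by (simp add: X.minus_eq)
  finally show ?thesis .
qed

lemma pj_zero: "pj j 0 = \<zero>\<^bsub>Xm\<^esub>"
  using group_hom.hom_one[OF pj_group_hom, of j] by (simp add: G_one)

lemma pj_Rel: "r \<in> Rel \<Longrightarrow> pj j r = \<zero>\<^bsub>Xm\<^esub>"
proof -
  assume "r \<in> Rel"
  then consider
    (a) m m' x where "r = frag_of (m \<oplus>\<^bsub>Mc\<^esub> m', x) - frag_of (m, x) - frag_of (m', x)"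
        "m \<in> carrier Mc" "m' \<in> carrier Mc" "x \<in> carrier Xm"
  | (b) m x x' where "r = frag_of (m, x \<oplus>\<^bsub>Xm\<^esub> x') - frag_of (m, x) - frag_of (m, x')"
        "m \<in> carrier Mc" "x \<in> carrier Xm" "x' \<in> carrier Xm"
  | (c) m t x where "r = frag_of (column_ract T m t, x) - frag_of (m, t \<odot>\<^bsub>Xm\<^esub> x)"
        "m \<in> carrier Mc" "t \<in> carrier T" "x \<in> carrier Xm"
    unfolding tensor_relations_def by blast
  then show ?thesis
  proof cases
    case a
    have "pj j r = (m j \<oplus>\<^bsub>T\<^esub> m' j) \<odot>\<^bsub>Xm\<^esub> x \<ominus>\<^bsub>Xm\<^esub> m j \<odot>\<^bsub>Xm\<^esub> x \<ominus>\<^bsub>Xm\<^esub> m' j \<odot>\<^bsub>Xm\<^esub> x"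
      using a by (simp add: pj_diff G_diff G_frag add_closed_Mc pj_frag) (simp add: Mc_add)
    also have "\<dots> = \<zero>\<^bsub>Xm\<^esub>"
      using a by (simp add: X_l_distr Mc_in X_cancel3 X_smult_closed)
    finally show ?thesis .
  next
    case b
    have "pj j r = m j \<odot>\<^bsub>Xm\<^esub> (x \<oplus>\<^bsub>Xm\<^esub> x') \<ominus>\<^bsub>Xm\<^esub> m j \<odot>\<^bsub>Xm\<^esub> x \<ominus>\<^bsub>Xm\<^esub> m j \<odot>\<^bsub>Xm\<^esub> x'"
      using b by (simp add: pj_diff G_diff G_frag pj_frag)
    also have "\<dots> = \<zero>\<^bsub>Xm\<^esub>"
      using b by (simp add: X_r_distr Mc_in X_cancel3 X_smult_closed)
    finally show ?thesis .
  next
    case c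
    have "pj j r = (m j \<otimes>\<^bsub>T\<^esub> t) \<odot>\<^bsub>Xm\<^esub> x \<ominus>\<^bsub>Xm\<^esub> m j \<odot>\<^bsub>Xm\<^esub> (t \<odot>\<^bsub>Xm\<^esub> x)"
      using c by (simp add: pj_diff G_diff G_frag pj_frag ract_closed X_smult_closed) (simp add: column_ract_def)
    also have "\<dots> = \<zero>\<^bsub>Xm\<^esub>"
      using c by (simp add: X_assoc Mc_in X_smult_closed X.r_neg X.minus_eq)
    finally show ?thesis .
  qed
qed

lemma pj_K: "c \<in> K \<Longrightarrow> pj j c = \<zero>\<^bsub>Xm\<^esub>"
  unfolding K_def'
proof (induction c rule: generate.induct)
  case one
  then show ?case by (simp add: G_one pj_zero)
next
  case (incl h)
  then show ?case by (rule pj_Rel)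
next
  case (inv h)
  then have "h \<in> carrier G" using Rel_sub by blast
  then show ?case using inv pj_minus pj_Rel by (simp add: G_inv)
next
  case (eng h1 h2)
  then have "h1 \<in> carrier G" "h2 \<in> carrier G" using K_sub K_def' by blast+
  then show ?case using eng by (simp add: G_mult pj_add)
qed

end

context tsetup begin

lemma rcos_alt: "K #>\<^bsub>G\<^esub> c = (\<lambda>k. k + c) ` K"
  by (auto simp: r_coset_def G_mult)

lemma carrier_Tens: "carrier Tens = (\<lambda>c. K #>\<^bsub>G\<^esub> c) ` carrier G"
  by (auto simp: tensor_def Let_def FactGroup_def RCOSETS_def)

lemma Tens_zero: "\<zero>\<^bsub>Tens\<^esub> = K"
  by (simp add: tensor_def Let_def FactGroup_def)

lemma Tens_add: "A \<oplus>\<^bsub>Tens\<^esub> C = A <#>\<^bsub>G\<^esub> C"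
  by (simp add: tensor_def Let_def FactGroup_def)

lemma Tens_smult: "b \<odot>\<^bsub>Tens\<^esub> A = K <#>\<^bsub>G\<^esub> (tensor_act Mc b ` A)"
  by (simp add: tensor_def Let_def)

lemma Tens_FG: "carrier Tens = carrier (G Mod K)" "\<zero>\<^bsub>Tens\<^esub> = \<one>\<^bsub>G Mod K\<^esub>"
   "A \<oplus>\<^bsub>Tens\<^esub> C = A \<otimes>\<^bsub>G Mod K\<^esub> C"
  by (simp_all add: tensor_def Let_def)

lemma coset_eq:
  assumes "c - d \<in> K"
  shows "K #>\<^bsub>G\<^esub> c = K #>\<^bsub>G\<^esub> d"
proof -
  have "(\<lambda>k. k + c) ` K \<subseteq> (\<lambda>k. k + d) ` K"
  proof
    fix y assume "y \<in> (\<lambda>k. k + c) ` K"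
    then obtain k where k: "k \<in> K" "y = k + c" by auto
    then have "y = (k + (c - d)) + d" by simp
    moreover have "k + (c - d) \<in> K" using k assms by (simp add: K_add)
    ultimately show "y \<in> (\<lambda>k. k + d) ` K" by blast
  qed
  moreover have "(\<lambda>k. k + d) ` K \<subseteq> (\<lambda>k. k + c) ` K"
  proof
    fix y assume "y \<in> (\<lambda>k. k + d) ` K"
    then obtain k where k: "k \<in> K" "y = k + d" by auto
    then have "y = (k - (c - d)) + c" by simp
    moreover have "k - (c - d) \<in> K" using k assms by (simp add: K_diff)
    ultimately show "y \<in> (\<lambda>k. k + c) ` K" by blast
  qed
  ultimately show ?thesis unfolding rcos_alt by blast
qed

lemma coset_eqD:
  assumes "K #>\<^bsub>G\<^esub> c = K #>\<^bsub>G\<^esub> d"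
  shows "c - d \<in> K"
proof -
  have "c \<in> K #>\<^bsub>G\<^esub> c" unfolding rcos_alt using K_zero by force
  then have "c \<in> (\<lambda>k. k + d) ` K" using assms rcos_alt by simp
  then obtain k where "k \<in> K" "c = k + d" by auto
  then show ?thesis by simp
qed

lemma coset_zero: "K #>\<^bsub>G\<^esub> 0 = K"
  unfolding rcos_alt by simp

lemma coset_mult: "(K #>\<^bsub>G\<^esub> c) <#>\<^bsub>G\<^esub> (K #>\<^bsub>G\<^esub> d) = K #>\<^bsub>G\<^esub> (c + d)"
proof -
  have "(K #>\<^bsub>G\<^esub> c) <#>\<^bsub>G\<^esub> (K #>\<^bsub>G\<^esub> d) = {a + b | a b. a \<in> (\<lambda>k. k + c) ` K \<and> b \<in> (\<lambda>k. k + d) ` K}"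
    unfolding rcos_alt set_mult_def G_mult by blast
  also have "\<dots> = (\<lambda>k. k + (c + d)) ` K"
  proof
    show "{a + b | a b. a \<in> (\<lambda>k. k + c) ` K \<and> b \<in> (\<lambda>k. k + d) ` K} \<subseteq> (\<lambda>k. k + (c + d)) ` K"
    proof
      fix y assume "y \<in> {a + b | a b. a \<in> (\<lambda>k. k + c) ` K \<and> b \<in> (\<lambda>k. k + d) ` K}"
      then obtain k k' where kk: "k \<in> K" "k' \<in> K" "y = (k + c) + (k' + d)" by blast
      then have "y = (k + k') + (c + d)" by (simp add: algebra_simps)
      moreover have "k + k' \<in> K" using kk by (simp add: K_add)
      ultimately show "y \<in> (\<lambda>k. k + (c + d)) ` K" by blast
    qed
    show "(\<lambda>k. k + (c + d)) ` K \<subseteq> {a + b | a b. a \<in> (\<lambda>k. k + c) ` K \<and> b \<in> (\<lambda>k. k + d) ` K}"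
    proof
      fix y assume "y \<in> (\<lambda>k. k + (c + d)) ` K"
      then obtain k where k: "k \<in> K" "y = k + (c + d)" by blast
      then have "y = (k + c) + (0 + d)" by (simp add: algebra_simps)
      then show "y \<in> {a + b | a b. a \<in> (\<lambda>k. k + c) ` K \<and> b \<in> (\<lambda>k. k + d) ` K}"
        using k K_zero by blast
    qed
  qed
  finally show ?thesis unfolding rcos_alt .
qed

abbreviation "act b \<equiv> tensor_act Mc b"

lemma act_frag: "act b (frag_of (m, x)) = frag_of (b \<odot>\<^bsub>Mc\<^esub> m, x)"
  by (simp add: tensor_act_def)

lemma act_add: "act b (c + d) = act b c + act b d"
  by (simp add: tensor_act_def frag_extend_add)

lemma act_diff: "act b (c - d) = act b c - act b d"
  by (simp add: tensor_act_def frag_extend_diff)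

lemma act_minus: "act b (- c) = - act b c"
  by (simp add: tensor_act_def frag_extend_minus)

lemma act_zero: "act b 0 = 0"
  by (simp add: tensor_act_def)

lemma act_carrier:
  assumes b: "b \<in> carrier B" and c: "c \<in> carrier G"
  shows "act b c \<in> carrier G"
proof -
  have "Poly_Mapping.keys (act b c) \<subseteq> (\<Union>s \<in> Poly_Mapping.keys c. Poly_Mapping.keys ((\<lambda>(m, x). frag_of (b \<odot>\<^bsub>Mc\<^esub> m, x)) s))"
    unfolding tensor_act_def by (rule keys_frag_extend)
  also have "\<dots> \<subseteq> S"
  proof
    fix y assume "y \<in> (\<Union>s \<in> Poly_Mapping.keys c. Poly_Mapping.keys ((\<lambda>(m, x). frag_of (b \<odot>\<^bsub>Mc\<^esub> m, x)) s))"
    then obtain m x where mx: "(m, x) \<in> Poly_Mapping.keys c" "y = (b \<odot>\<^bsub>Mc\<^esub> m, x)"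
      by (auto simp: keys_frag_of)
    then have "(m, x) \<in> S" using c by (auto simp: carrier_G)
    then show "y \<in> S" using mx b by (auto intro: smult_closed_Mc)
  qed
  finally show ?thesis by (simp add: carrier_G)
qed

lemma act_Rel:
  assumes b: "b \<in> carrier B" and r: "r \<in> Rel"
  shows "act b r \<in> K"
proof -
  from r consider
    (a) m m' x where "r = frag_of (m \<oplus>\<^bsub>Mc\<^esub> m', x) - frag_of (m, x) - frag_of (m', x)"
        "m \<in> carrier Mc" "m' \<in> carrier Mc" "x \<in> carrier Xm"
  | (b) m x x' where "r = frag_of (m, x \<oplus>\<^bsub>Xm\<^esub> x') - frag_of (m, x) - frag_of (m, x')"
        "m \<in> carrier Mc" "x \<in> carrier Xm" "x' \<in> carrier Xm"
  | (c) m t x where "r = frag_of (column_ract T m t, x) - frag_of (m, t \<odot>\<^bsub>Xm\<^esub> x)"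
        "m \<in> carrier Mc" "t \<in> carrier T" "x \<in> carrier Xm"
    unfolding tensor_relations_def by blast
  then show ?thesis
  proof cases
    case a
    then have "act b r = frag_of (b \<odot>\<^bsub>Mc\<^esub> m \<oplus>\<^bsub>Mc\<^esub> b \<odot>\<^bsub>Mc\<^esub> m', x) - frag_of (b \<odot>\<^bsub>Mc\<^esub> m, x) - frag_of (b \<odot>\<^bsub>Mc\<^esub> m', x)"
      using b by (simp add: act_diff act_frag Mc_r_distr)
    then show ?thesis using a b by (simp add: K_rel1 smult_closed_Mc)
  next
    case b
    then have "act b r = frag_of (b \<odot>\<^bsub>Mc\<^esub> m, x \<oplus>\<^bsub>Xm\<^esub> x') - frag_of (b \<odot>\<^bsub>Mc\<^esub> m, x) - frag_of (b \<odot>\<^bsub>Mc\<^esub> m, x')"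
      by (simp add: act_diff act_frag)
    then show ?thesis using b assms by (simp add: K_rel2 smult_closed_Mc)
  next
    case c
    then have "act b r = frag_of (column_ract T (b \<odot>\<^bsub>Mc\<^esub> m) t, x) - frag_of (b \<odot>\<^bsub>Mc\<^esub> m, t \<odot>\<^bsub>Xm\<^esub> x)"
      using b by (simp add: act_diff act_frag Mc_ract)
    then show ?thesis using c b by (simp add: K_rel3 smult_closed_Mc)
  qed
qed

lemma act_K:
  assumes b: "b \<in> carrier B"
  shows "c \<in> K \<Longrightarrow> act b c \<in> K"
  unfolding K_def'
proof (induction c rule: generate.induct)
  case one
  then show ?case using K_zero by (simp add: G_one act_zero K_def')
next
  case (incl h)
  then show ?case using act_Rel[OF b] by (simp add: K_def')
next
  case (inv h)
  then have "h \<in> carrier G" using Rel_sub by blast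
  then show ?case using inv act_Rel[OF b] K_minus by (simp add: G_inv act_minus K_def')
next
  case (eng h1 h2)
  then show ?case using K_add by (simp add: G_mult act_add K_def')
qed

lemma smult_coset:
  assumes b: "b \<in> carrier B"
  shows "K <#>\<^bsub>G\<^esub> (act b ` (K #>\<^bsub>G\<^esub> c)) = K #>\<^bsub>G\<^esub> act b c"
proof
  show "K <#>\<^bsub>G\<^esub> (act b ` (K #>\<^bsub>G\<^esub> c)) \<subseteq> K #>\<^bsub>G\<^esub> act b c"
  proof
    fix y assume "y \<in> K <#>\<^bsub>G\<^esub> (act b ` (K #>\<^bsub>G\<^esub> c))"
    then obtain k k' where kk: "k \<in> K" "k' \<in> K" "y = k + act b (k' + c)"
      unfolding set_mult_def rcos_alt G_mult by blast
    then have "y = (k + act b k') + act b c" by (simp add: act_add algebra_simps)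
    moreover have "k + act b k' \<in> K" using kk act_K[OF b] K_add by blast
    ultimately show "y \<in> K #>\<^bsub>G\<^esub> act b c" unfolding rcos_alt by blast
  qed
  show "K #>\<^bsub>G\<^esub> act b c \<subseteq> K <#>\<^bsub>G\<^esub> (act b ` (K #>\<^bsub>G\<^esub> c))"
  proof
    fix y assume "y \<in> K #>\<^bsub>G\<^esub> act b c"
    then obtain k where k: "k \<in> K" "y = k + act b c" unfolding rcos_alt by blast
    then have "y = k + act b (0 + c)" by simp
    then show "y \<in> K <#>\<^bsub>G\<^esub> (act b ` (K #>\<^bsub>G\<^esub> c))"
      unfolding set_mult_def rcos_alt G_mult using k K_zero by blast
  qed
qed

end

context tsetup begin

lemma G_induct[consumes 1, case_names zero diff gen]:
  assumes c: "c \<in> carrier G"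
    and z: "P 0"
    and d: "\<And>x y. x \<in> carrier G \<Longrightarrow> y \<in> carrier G \<Longrightarrow> P x \<Longrightarrow> P y \<Longrightarrow> P (x - y)"
    and g: "\<And>m x. m \<in> carrier Mc \<Longrightarrow> x \<in> carrier Xm \<Longrightarrow> P (frag_of (m, x))"
  shows "P c"
proof (rule free_Abelian_group_induct[where P=P])
  show "Poly_Mapping.keys c \<subseteq> S" using c by (simp add: carrier_G)
  show "P 0" by (rule z)
  show "\<And>x y. Poly_Mapping.keys x \<subseteq> S \<Longrightarrow> Poly_Mapping.keys y \<subseteq> S \<Longrightarrow> P x \<Longrightarrow> P y \<Longrightarrow> P (x - y)"
    using d by (simp add: carrier_G)
  show "\<And>a. a \<in> S \<Longrightarrow> P (frag_of a)" using g by auto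
qed

lemma carrier_TensE:
  assumes "A \<in> carrier Tens"
  obtains c where "c \<in> carrier G" "A = K #>\<^bsub>G\<^esub> c"
  using assms unfolding carrier_Tens by blast

lemma coset_in_Tens: "c \<in> carrier G \<Longrightarrow> K #>\<^bsub>G\<^esub> c \<in> carrier Tens"
  unfolding carrier_Tens by blast

lemma smult_coset': "b \<in> carrier B \<Longrightarrow> b \<odot>\<^bsub>Tens\<^esub> (K #>\<^bsub>G\<^esub> c) = K #>\<^bsub>G\<^esub> act b c"
  by (simp add: Tens_smult smult_coset)

lemma add_coset: "(K #>\<^bsub>G\<^esub> c) \<oplus>\<^bsub>Tens\<^esub> (K #>\<^bsub>G\<^esub> d) = K #>\<^bsub>G\<^esub> (c + d)"
  by (simp add: Tens_add coset_mult)

lemma comm_group_FG: "comm_group (G Mod K)"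
  by (rule comm_group.abelian_FactGroup[OF comm_group_G K_subgroup])

lemma abelian_group_Tens: "abelian_group Tens"
proof -
  interpret FG: comm_group "G Mod K" by (rule comm_group_FG)
  show ?thesis
  proof (rule abelian_groupI)
    fix x y z assume x: "x \<in> carrier Tens" and y: "y \<in> carrier Tens" and z: "z \<in> carrier Tens"
    show "x \<oplus>\<^bsub>Tens\<^esub> y \<in> carrier Tens" unfolding Tens_FG
      by (rule FG.m_closed) (use x y in \<open>simp_all add: Tens_FG\<close>)
    show "x \<oplus>\<^bsub>Tens\<^esub> y \<oplus>\<^bsub>Tens\<^esub> z = x \<oplus>\<^bsub>Tens\<^esub> (y \<oplus>\<^bsub>Tens\<^esub> z)"
      unfolding Tens_FG by (rule FG.m_assoc) (use x y z in \<open>simp_all add: Tens_FG\<close>)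
    show "x \<oplus>\<^bsub>Tens\<^esub> y = y \<oplus>\<^bsub>Tens\<^esub> x" unfolding Tens_FG
      by (rule FG.m_comm) (use x y in \<open>simp_all add: Tens_FG\<close>)
    show "\<zero>\<^bsub>Tens\<^esub> \<oplus>\<^bsub>Tens\<^esub> x = x" unfolding Tens_FG
      by (rule FG.l_one) (use x in \<open>simp_all add: Tens_FG\<close>)
    show "\<exists>y\<in>carrier Tens. y \<oplus>\<^bsub>Tens\<^esub> x = \<zero>\<^bsub>Tens\<^esub>"
      unfolding Tens_FG
    proof (intro bexI[of _ "inv\<^bsub>G Mod K\<^esub> x"])
      have "x \<in> carrier (G Mod K)" using x by (simp add: Tens_FG)
      then show "inv\<^bsub>G Mod K\<^esub> x \<otimes>\<^bsub>G Mod K\<^esub> x = \<one>\<^bsub>G Mod K\<^esub>" "inv\<^bsub>G Mod K\<^esub> x \<in> carrier (G Mod K)"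
        by (rule FG.l_inv, rule FG.inv_closed)
    qed
  next
    show "\<zero>\<^bsub>Tens\<^esub> \<in> carrier Tens" unfolding Tens_FG by (rule FG.one_closed)
  qed
qed

lemma act_l_distr:
  assumes a: "a \<in> carrier B" and b: "b \<in> carrier B" and c: "c \<in> carrier G"
  shows "act (a \<oplus>\<^bsub>B\<^esub> b) c - (act a c + act b c) \<in> K"
  using c
proof (induction c rule: G_induct)
  case zero then show ?case by (simp add: act_zero K_zero)
next
  case (diff x y)
  have "act (a \<oplus>\<^bsub>B\<^esub> b) (x - y) - (act a (x - y) + act b (x - y))
      = (act (a \<oplus>\<^bsub>B\<^esub> b) x - (act a x + act b x)) - (act (a \<oplus>\<^bsub>B\<^esub> b) y - (act a y + act b y))"
    by (simp add: act_diff algebra_simps)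
  then show ?case using diff by (simp add: K_diff)
next
  case (gen m x)
  have "act (a \<oplus>\<^bsub>B\<^esub> b) (frag_of (m, x)) - (act a (frag_of (m, x)) + act b (frag_of (m, x)))
     = frag_of (a \<odot>\<^bsub>Mc\<^esub> m \<oplus>\<^bsub>Mc\<^esub> b \<odot>\<^bsub>Mc\<^esub> m, x) - frag_of (a \<odot>\<^bsub>Mc\<^esub> m, x) - frag_of (b \<odot>\<^bsub>Mc\<^esub> m, x)"
    using gen a b by (simp add: act_frag Mc_l_distr)
  then show ?case using gen a b by (simp add: K_rel1 smult_closed_Mc)
qed

lemma act_assoc:
  assumes a: "a \<in> carrier B" and b: "b \<in> carrier B" and c: "c \<in> carrier G"
  shows "act a (act b c) = act (a \<otimes>\<^bsub>B\<^esub> b) c"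
  using c
proof (induction c rule: G_induct)
  case zero then show ?case by (simp add: act_zero)
next
  case (diff x y) then show ?case by (simp add: act_diff)
next
  case (gen m x) then show ?case using a b by (simp add: act_frag Mc_assoc)
qed

lemma act_one:
  assumes c: "c \<in> carrier G"
  shows "act \<one>\<^bsub>B\<^esub> c = c"
  using c
proof (induction c rule: G_induct)
  case zero then show ?case by (simp add: act_zero)
next
  case (diff x y) then show ?case by (simp add: act_diff)
next
  case (gen m x) then show ?case by (simp add: act_frag Mc_one)
qed

lemma left_module_Tens: "left_module B Tens"
  unfolding left_module_def
proof (intro conjI ballI)
  show "ring B" by (rule ring_B)
  show "abelian_group Tens" by (rule abelian_group_Tens)
next
  fix a x assume a: "a \<in> carrier B" and x: "x \<in> carrier Tens"
  obtain c where c: "c \<in> carrier G" "x = K #>\<^bsub>G\<^esub> c" using x by (rule carrier_TensE)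
  show "a \<odot>\<^bsub>Tens\<^esub> x \<in> carrier Tens"
    using a c by (simp add: smult_coset' coset_in_Tens act_carrier)
next
  fix a b x assume a: "a \<in> carrier B" and b: "b \<in> carrier B" and x: "x \<in> carrier Tens"
  obtain c where c: "c \<in> carrier G" "x = K #>\<^bsub>G\<^esub> c" using x by (rule carrier_TensE)
  have ab: "a \<oplus>\<^bsub>B\<^esub> b \<in> carrier B" using a b ring.ring_simprules(1)[OF ring_B] by blast
  show "(a \<oplus>\<^bsub>B\<^esub> b) \<odot>\<^bsub>Tens\<^esub> x = a \<odot>\<^bsub>Tens\<^esub> x \<oplus>\<^bsub>Tens\<^esub> b \<odot>\<^bsub>Tens\<^esub> x"
    using a b ab c act_l_distr[OF a b c(1)] by (simp add: smult_coset' add_coset coset_eq)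
  have abm: "a \<otimes>\<^bsub>B\<^esub> b \<in> carrier B" using a b by (simp add: B_mult mm_closed)
  show "(a \<otimes>\<^bsub>B\<^esub> b) \<odot>\<^bsub>Tens\<^esub> x = a \<odot>\<^bsub>Tens\<^esub> (b \<odot>\<^bsub>Tens\<^esub> x)"
    using a b abm c by (simp add: smult_coset' act_assoc)
next
  fix a x y assume a: "a \<in> carrier B" and x: "x \<in> carrier Tens" and y: "y \<in> carrier Tens"
  obtain c where c: "c \<in> carrier G" "x = K #>\<^bsub>G\<^esub> c" using x by (rule carrier_TensE)
  obtain d where d: "d \<in> carrier G" "y = K #>\<^bsub>G\<^esub> d" using y by (rule carrier_TensE)
  show "a \<odot>\<^bsub>Tens\<^esub> (x \<oplus>\<^bsub>Tens\<^esub> y) = a \<odot>\<^bsub>Tens\<^esub> x \<oplus>\<^bsub>Tens\<^esub> a \<odot>\<^bsub>Tens\<^esub> y"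
    using a c d by (simp add: smult_coset' add_coset act_add)
next
  fix x assume x: "x \<in> carrier Tens"
  obtain c where c: "c \<in> carrier G" "x = K #>\<^bsub>G\<^esub> c" using x by (rule carrier_TensE)
  show "\<one>\<^bsub>B\<^esub> \<odot>\<^bsub>Tens\<^esub> x = x" using c by (simp add: smult_coset' one_closed_B act_one)
qed

end

context tsetup begin

definition eu :: "nat \<Rightarrow> 'a \<Rightarrow> nat \<Rightarrow> 'a" where
  "eu j t = (\<lambda>i. if i = j then t else \<zero>\<^bsub>T\<^esub>)"

definition Em :: "nat \<Rightarrow> nat \<Rightarrow> 'a \<Rightarrow> nat \<Rightarrow> nat \<Rightarrow> 'a" where
  "Em i j t = (\<lambda>p q. if p = i \<and> q = j then t else \<zero>\<^bsub>T\<^esub>)"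

lemma eu_Mc: "j < n \<Longrightarrow> t \<in> carrier T \<Longrightarrow> eu j t \<in> carrier Mc"
  by (auto simp: carrier_Mc eu_def)

lemma Em_B: "i \<le> j \<Longrightarrow> j < n \<Longrightarrow> t \<in> carrier T \<Longrightarrow> Em i j t \<in> carrier B"
  by (auto simp: carrier_B Em_def)

lemma Em_act:
  assumes ij: "i \<le> j" "j < n" and t: "t \<in> carrier T" and m: "m \<in> carrier Mc"
  shows "Em i j t \<odot>\<^bsub>Mc\<^esub> m = column_ract T (eu i t) (m j)"
proof (rule ext)
  fix p
  define f where "f = (\<lambda>k. (if p = i then t else \<zero>\<^bsub>T\<^esub>) \<otimes>\<^bsub>T\<^esub> m k)"
  have f: "\<And>k. f k \<in> carrier T" unfolding f_def using t m by (simp add: Mc_in)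
  have "mv (Em i j t) m p = (\<Oplus>\<^bsub>T\<^esub> k\<in>{..<n}. if k = j then f k else \<zero>\<^bsub>T\<^esub>)"
    unfolding mv_def Em_def f_def using t m by (intro T.finsum_cong') (auto simp: Mc_in)
  also have "\<dots> = f j" using ij f by (simp add: sum_delta)
  finally show "(Em i j t \<odot>\<^bsub>Mc\<^esub> m) p = column_ract T (eu i t) (m j) p"
    using Mc_smult[OF Em_B[OF ij t] m] by (simp add: f_def column_ract_def eu_def)
qed

lemma X_sub_add: "a \<in> carrier Xm \<Longrightarrow> b \<in> carrier Xm \<Longrightarrow> (a \<ominus>\<^bsub>Xm\<^esub> b) \<oplus>\<^bsub>Xm\<^esub> b = a"
  by (simp add: X.minus_eq X.a_assoc X.l_neg)

lemma X_minus_zero: "a \<in> carrier Xm \<Longrightarrow> b \<in> carrier Xm \<Longrightarrow> a \<ominus>\<^bsub>Xm\<^esub> b = \<zero>\<^bsub>Xm\<^esub> \<Longrightarrow> a = b"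
  using X_sub_add[of a b] by simp

lemma X_neg_smult: 
  assumes x: "x \<in> carrier Xm"
  shows "(\<ominus>\<^bsub>T\<^esub> \<one>\<^bsub>T\<^esub>) \<odot>\<^bsub>Xm\<^esub> x = \<ominus>\<^bsub>Xm\<^esub> x"
proof -
  have c: "(\<ominus>\<^bsub>T\<^esub> \<one>\<^bsub>T\<^esub>) \<odot>\<^bsub>Xm\<^esub> x \<in> carrier Xm" using x by (simp add: X_smult_closed)
  have "(\<ominus>\<^bsub>T\<^esub> \<one>\<^bsub>T\<^esub>) \<odot>\<^bsub>Xm\<^esub> x \<oplus>\<^bsub>Xm\<^esub> x = (\<ominus>\<^bsub>T\<^esub> \<one>\<^bsub>T\<^esub>) \<odot>\<^bsub>Xm\<^esub> x \<oplus>\<^bsub>Xm\<^esub> \<one>\<^bsub>T\<^esub> \<odot>\<^bsub>Xm\<^esub> x"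
    using x by (simp add: X_one)
  also have "\<dots> = (\<ominus>\<^bsub>T\<^esub> \<one>\<^bsub>T\<^esub> \<oplus>\<^bsub>T\<^esub> \<one>\<^bsub>T\<^esub>) \<odot>\<^bsub>Xm\<^esub> x"
    using x by (simp add: X_l_distr)
  also have "\<dots> = \<zero>\<^bsub>T\<^esub> \<odot>\<^bsub>Xm\<^esub> x" by (simp add: T.l_neg)
  also have "\<dots> = \<zero>\<^bsub>Xm\<^esub>" using x by (rule X_zero_smult)
  finally have "(\<ominus>\<^bsub>T\<^esub> \<one>\<^bsub>T\<^esub>) \<odot>\<^bsub>Xm\<^esub> x \<oplus>\<^bsub>Xm\<^esub> x = \<zero>\<^bsub>Xm\<^esub>" .
  from X.minus_equality[OF this x c] show ?thesis by (rule sym)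
qed

lemma E_coset:
  assumes ij: "i \<le> j" "j < n" and t: "t \<in> carrier T" and c: "c \<in> carrier G"
  shows "act (Em i j t) c - frag_of (eu i t, pj j c) \<in> K"
  using c
proof (induction c rule: G_induct)
  case zero
  have "- frag_of (eu i t, \<zero>\<^bsub>Xm\<^esub>) \<in> K"
    using ij t by (intro K_minus K_frag_zero2 eu_Mc) auto
  then show ?case by (simp add: act_zero pj_zero)
next
  case (diff x y)
  define w where "w = eu i t"
  have w: "w \<in> carrier Mc" unfolding w_def using ij t by (intro eu_Mc) auto
  have px: "pj j x \<in> carrier Xm" and py: "pj j y \<in> carrier Xm" using diff by (simp_all add: pj_closed)
  have r: "frag_of (w, pj j x) - frag_of (w, pj j x \<ominus>\<^bsub>Xm\<^esub> pj j y) - frag_of (w, pj j y) \<in> K"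
    using K_rel2[OF w X.minus_closed[OF px py] py] by (simp add: X_sub_add px py)
  have eq: "act (Em i j t) (x - y) - frag_of (w, pj j (x - y))
      = (act (Em i j t) x - frag_of (w, pj j x)) - (act (Em i j t) y - frag_of (w, pj j y))
        + (frag_of (w, pj j x) - frag_of (w, pj j x \<ominus>\<^bsub>Xm\<^esub> pj j y) - frag_of (w, pj j y))"
    using diff by (simp add: act_diff pj_diff algebra_simps)
  have "act (Em i j t) (x - y) - frag_of (w, pj j (x - y)) \<in> K"
    unfolding eq unfolding w_def by (rule K_add[OF K_diff[OF diff(3) diff(4)] r[unfolded w_def]])
  then show ?case unfolding w_def .
next
  case (gen m x)
  have "act (Em i j t) (frag_of (m, x)) - frag_of (eu i t, pj j (frag_of (m, x)))
      = frag_of (column_ract T (eu i t) (m j), x) - frag_of (eu i t, m j \<odot>\<^bsub>Xm\<^esub> x)"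
    using gen ij t by (simp add: act_frag Em_act pj_frag)
  then show ?case using gen ij t by (simp add: K_rel3 eu_Mc Mc_in)
qed

lemma mJ:
  assumes m: "m \<in> carrier Mc" and x: "x \<in> carrier Xm"
  shows "finite J \<Longrightarrow> J \<subseteq> {..<n} \<Longrightarrow>
    frag_of (\<lambda>i. if i \<in> J then m i else \<zero>\<^bsub>T\<^esub>, x) - (\<Sum>j\<in>J. frag_of (eu j \<one>\<^bsub>T\<^esub>, m j \<odot>\<^bsub>Xm\<^esub> x)) \<in> K"
proof (induction J rule: finite_induct)
  case empty
  then show ?case using K_frag_zero1[OF x] by (simp add: Mc_zero_el)
next
  case (insert j J)
  define mJ where "mJ = (\<lambda>i. if i \<in> J then m i else \<zero>\<^bsub>T\<^esub>)"
  define e where "e = column_ract T (eu j \<one>\<^bsub>T\<^esub>) (m j)"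
  have jn: "j < n" using insert by auto
  have mJ_c: "mJ \<in> carrier Mc" unfolding mJ_def using m insert(4) by (auto simp: carrier_Mc Mc_in)
  have e_c: "e \<in> carrier Mc" unfolding e_def using m jn by (simp add: ract_closed eu_Mc Mc_in)
  have eq: "(\<lambda>i. if i \<in> insert j J then m i else \<zero>\<^bsub>T\<^esub>) = mJ \<oplus>\<^bsub>Mc\<^esub> e"
  proof (rule ext)
    fix i
    show "(if i \<in> insert j J then m i else \<zero>\<^bsub>T\<^esub>) = (mJ \<oplus>\<^bsub>Mc\<^esub> e) i"
      using insert(2) m by (auto simp: Mc_add mJ_def e_def column_ract_def eu_def Mc_in)
  qed
  have r1: "frag_of (mJ \<oplus>\<^bsub>Mc\<^esub> e, x) - frag_of (mJ, x) - frag_of (e, x) \<in> K"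
    using mJ_c e_c x by (rule K_rel1)
  have r3: "frag_of (e, x) - frag_of (eu j \<one>\<^bsub>T\<^esub>, m j \<odot>\<^bsub>Xm\<^esub> x) \<in> K"
    unfolding e_def using jn m x by (simp add: K_rel3 eu_Mc Mc_in)
  have IH: "frag_of (mJ, x) - (\<Sum>j\<in>J. frag_of (eu j \<one>\<^bsub>T\<^esub>, m j \<odot>\<^bsub>Xm\<^esub> x)) \<in> K"
    using insert unfolding mJ_def by auto
  have eq2: "frag_of (\<lambda>i. if i \<in> insert j J then m i else \<zero>\<^bsub>T\<^esub>, x) - (\<Sum>j\<in>insert j J. frag_of (eu j \<one>\<^bsub>T\<^esub>, m j \<odot>\<^bsub>Xm\<^esub> x))
     = (frag_of (mJ \<oplus>\<^bsub>Mc\<^esub> e, x) - frag_of (mJ, x) - frag_of (e, x))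
       + (frag_of (e, x) - frag_of (eu j \<one>\<^bsub>T\<^esub>, m j \<odot>\<^bsub>Xm\<^esub> x))
       + (frag_of (mJ, x) - (\<Sum>j\<in>J. frag_of (eu j \<one>\<^bsub>T\<^esub>, m j \<odot>\<^bsub>Xm\<^esub> x)))"
    unfolding eq using insert(1,2) by (simp add: algebra_simps)
  show ?case unfolding eq2 by (rule K_add[OF K_add[OF r1 r3] IH])
qed

lemma decomp:
  assumes c: "c \<in> carrier G"
  shows "c - (\<Sum>j<n. frag_of (eu j \<one>\<^bsub>T\<^esub>, pj j c)) \<in> K"
  using c
proof (induction c rule: G_induct)
  case zero
  have "(\<Sum>j<n. frag_of (eu j \<one>\<^bsub>T\<^esub>, \<zero>\<^bsub>Xm\<^esub>)) \<in> K"
    by (intro K_sum K_frag_zero2 eu_Mc) auto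
  then show ?case by (simp add: pj_zero K_minus)
next
  case (diff x y)
  define A where "A = (\<lambda>j. frag_of (eu j \<one>\<^bsub>T\<^esub>, pj j x))"
  define Bf where "Bf = (\<lambda>j. frag_of (eu j \<one>\<^bsub>T\<^esub>, pj j y))"
  define C where "C = (\<lambda>j. frag_of (eu j \<one>\<^bsub>T\<^esub>, pj j x \<ominus>\<^bsub>Xm\<^esub> pj j y))"
  have r: "(\<Sum>j<n. A j - C j - Bf j) \<in> K"
  proof (intro K_sum)
    fix j assume "j \<in> {..<n}"
    then have w: "eu j \<one>\<^bsub>T\<^esub> \<in> carrier Mc" by (intro eu_Mc) auto
    have px: "pj j x \<in> carrier Xm" and py: "pj j y \<in> carrier Xm" using diff by (simp_all add: pj_closed)
    show "A j - C j - Bf j \<in> K"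
      using K_rel2[OF w X.minus_closed[OF px py] py] unfolding A_def Bf_def C_def
      by (simp add: X_sub_add px py)
  qed simp
  have pjd: "\<And>j. pj j (x - y) = pj j x \<ominus>\<^bsub>Xm\<^esub> pj j y" using diff by (simp add: pj_diff)
  have eq: "x - y - (\<Sum>j<n. frag_of (eu j \<one>\<^bsub>T\<^esub>, pj j (x - y)))
      = (x - sum A {..<n}) - (y - sum Bf {..<n}) + (\<Sum>j<n. A j - C j - Bf j)"
    unfolding pjd C_def[symmetric] by (simp add: sum_subtractf sum.distrib algebra_simps)
  have h1: "x - sum A {..<n} \<in> K" using diff(3) unfolding A_def .
  have h2: "y - sum Bf {..<n} \<in> K" using diff(4) unfolding Bf_def .
  show ?case unfolding eq by (rule K_add[OF K_diff[OF h1 h2] r])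
next
  case (gen m x)
  have "(\<lambda>i. if i \<in> {..<n} then m i else \<zero>\<^bsub>T\<^esub>) = m"
    using gen by (auto simp: Mc_zero)
  then have "frag_of (m, x) - (\<Sum>j<n. frag_of (eu j \<one>\<^bsub>T\<^esub>, m j \<odot>\<^bsub>Xm\<^esub> x)) \<in> K"
    using mJ[OF gen, of "{..<n}"] by simp
  then show ?case using gen by (simp add: pj_frag)
qed

lemma decomp_K:
  assumes c: "c \<in> carrier G" and z: "\<And>j. j < n \<Longrightarrow> pj j c = \<zero>\<^bsub>Xm\<^esub>"
  shows "c \<in> K"
proof -
  have s: "(\<Sum>j<n. frag_of (eu j \<one>\<^bsub>T\<^esub>, pj j c)) \<in> K"
    using z by (intro K_sum) (auto simp: K_frag_zero2 eu_Mc)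
  have "(c - (\<Sum>j<n. frag_of (eu j \<one>\<^bsub>T\<^esub>, pj j c))) + (\<Sum>j<n. frag_of (eu j \<one>\<^bsub>T\<^esub>, pj j c)) \<in> K"
    by (rule K_add[OF decomp[OF c] s])
  then show ?thesis by simp
qed

end

context tsetup begin

definition iota :: "'x \<Rightarrow> ((nat \<Rightarrow> 'a) \<times> 'x \<Rightarrow>\<^sub>0 int) set" where
  "iota x = K #>\<^bsub>G\<^esub> frag_of (eu 0 \<one>\<^bsub>T\<^esub>, x)"

lemma e0_Mc: "eu 0 \<one>\<^bsub>T\<^esub> \<in> carrier Mc"
  using n1 by (intro eu_Mc) auto

lemma iota_Tens: "x \<in> carrier Xm \<Longrightarrow> iota x \<in> carrier Tens"
  unfolding iota_def by (intro coset_in_Tens G_frag e0_Mc)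

lemma pj_e0: "x \<in> carrier Xm \<Longrightarrow> pj 0 (frag_of (eu 0 \<one>\<^bsub>T\<^esub>, x)) = x"
  by (subst pj_frag[OF e0_Mc]) (simp_all add: eu_def X_one)

lemma E_smult:
  assumes j: "j < n" and t: "t \<in> carrier T" and c: "c \<in> carrier G"
  shows "Em 0 j t \<odot>\<^bsub>Tens\<^esub> (K #>\<^bsub>G\<^esub> c) = K #>\<^bsub>G\<^esub> frag_of (eu 0 t, pj j c)"
proof -
  have "Em 0 j t \<odot>\<^bsub>Tens\<^esub> (K #>\<^bsub>G\<^esub> c) = K #>\<^bsub>G\<^esub> act (Em 0 j t) c"
    using j t by (intro smult_coset' Em_B) auto
  also have "\<dots> = K #>\<^bsub>G\<^esub> frag_of (eu 0 t, pj j c)"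
    using j t c by (intro coset_eq E_coset) auto
  finally show ?thesis .
qed

lemma E_smult_iota:
  assumes j: "j < n" and c: "c \<in> carrier G"
  shows "Em 0 j \<one>\<^bsub>T\<^esub> \<odot>\<^bsub>Tens\<^esub> (K #>\<^bsub>G\<^esub> c) = iota (pj j c)"
  unfolding iota_def using j c by (intro E_smult) auto

lemma iota_smult:
  assumes t: "t \<in> carrier T" and x: "x \<in> carrier Xm"
  shows "Em 0 0 t \<odot>\<^bsub>Tens\<^esub> iota x = iota (t \<odot>\<^bsub>Xm\<^esub> x)"
proof -
  have "Em 0 0 t \<odot>\<^bsub>Tens\<^esub> iota x = K #>\<^bsub>G\<^esub> frag_of (eu 0 t, x)"
    unfolding iota_def using n1 t x E_smult[of 0 t "frag_of (eu 0 \<one>\<^bsub>T\<^esub>, x)"]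
    by (simp add: G_frag e0_Mc pj_e0)
  also have "\<dots> = iota (t \<odot>\<^bsub>Xm\<^esub> x)"
  proof -
    have "column_ract T (eu 0 \<one>\<^bsub>T\<^esub>) t = eu 0 t"
      using t by (auto simp: column_ract_def eu_def)
    then show ?thesis unfolding iota_def
      using K_rel3[OF e0_Mc t x] by (intro coset_eq) simp
  qed
  finally show ?thesis .
qed

lemma iota_add:
  assumes x: "x \<in> carrier Xm" and y: "y \<in> carrier Xm"
  shows "iota (x \<oplus>\<^bsub>Xm\<^esub> y) = iota x \<oplus>\<^bsub>Tens\<^esub> iota y"
  unfolding iota_def add_coset
  using K_rel2[OF e0_Mc x y] by (intro coset_eq) (simp add: algebra_simps)

lemma iota_zero: "iota \<zero>\<^bsub>Xm\<^esub> = K"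
proof -
  have "iota \<zero>\<^bsub>Xm\<^esub> = K #>\<^bsub>G\<^esub> 0"
    unfolding iota_def using K_frag_zero2[OF e0_Mc] by (intro coset_eq) simp
  then show ?thesis by (simp add: coset_zero)
qed

lemma iota_zero_iff:
  assumes x: "x \<in> carrier Xm" and e: "iota x = K"
  shows "x = \<zero>\<^bsub>Xm\<^esub>"
proof -
  have "iota x = K #>\<^bsub>G\<^esub> 0" using e by (simp add: coset_zero)
  then have "frag_of (eu 0 \<one>\<^bsub>T\<^esub>, x) - 0 \<in> K" unfolding iota_def by (rule coset_eqD)
  then have "pj 0 (frag_of (eu 0 \<one>\<^bsub>T\<^esub>, x)) = \<zero>\<^bsub>Xm\<^esub>" by (intro pj_K) simp
  then show ?thesis using x by (simp add: pj_e0)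
qed

lemma sm_facts:
  assumes "submodule U B Tens"
  shows "U \<subseteq> carrier Tens" "K \<in> U" "\<And>a b. a \<in> U \<Longrightarrow> b \<in> U \<Longrightarrow> a \<oplus>\<^bsub>Tens\<^esub> b \<in> U"
    "\<And>b a. b \<in> carrier B \<Longrightarrow> a \<in> U \<Longrightarrow> b \<odot>\<^bsub>Tens\<^esub> a \<in> U"
proof -
  have sg: "subgroup U (add_monoid Tens)" using assms by (rule submodule.axioms(1))
  show "U \<subseteq> carrier Tens" using subgroup.subset[OF sg] by simp
  show "K \<in> U" using subgroup.one_closed[OF sg] by (simp add: Tens_zero)
  show "\<And>a b. a \<in> U \<Longrightarrow> b \<in> U \<Longrightarrow> a \<oplus>\<^bsub>Tens\<^esub> b \<in> U"
    using subgroup.m_closed[OF sg] by simp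
  show "\<And>b a. b \<in> carrier B \<Longrightarrow> a \<in> U \<Longrightarrow> b \<odot>\<^bsub>Tens\<^esub> a \<in> U"
    using assms by (rule submodule.smult_closed)
qed

lemma sub_prime:
  assumes U: "submodule U B Tens"
  shows "submodule {x \<in> carrier Xm. iota x \<in> U} T Xm"
proof -
  note f = sm_facts[OF U]
  have sm: "\<And>t x. t \<in> carrier T \<Longrightarrow> x \<in> carrier Xm \<Longrightarrow> iota x \<in> U \<Longrightarrow> iota (t \<odot>\<^bsub>Xm\<^esub> x) \<in> U"
  proof -
    fix t x assume t: "t \<in> carrier T" and x: "x \<in> carrier Xm" and u: "iota x \<in> U"
    have "Em 0 0 t \<odot>\<^bsub>Tens\<^esub> iota x \<in> U" using n1 t u by (intro f(4) Em_B) auto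
    then show "iota (t \<odot>\<^bsub>Xm\<^esub> x) \<in> U" using iota_smult[OF t x] by simp
  qed
  show ?thesis
  proof (intro submodule.intro subgroup.intro submodule_axioms.intro)
    show "{x \<in> carrier Xm. iota x \<in> U} \<subseteq> carrier (add_monoid Xm)" by auto
  next
    fix x y assume x: "x \<in> {x \<in> carrier Xm. iota x \<in> U}" and y: "y \<in> {x \<in> carrier Xm. iota x \<in> U}"
    then show "x \<otimes>\<^bsub>add_monoid Xm\<^esub> y \<in> {x \<in> carrier Xm. iota x \<in> U}"
      by (auto simp: iota_add f(3))
  next
    show "\<one>\<^bsub>add_monoid Xm\<^esub> \<in> {x \<in> carrier Xm. iota x \<in> U}"
      by (simp add: iota_zero f(2))
  next
    fix x assume x: "x \<in> {x \<in> carrier Xm. iota x \<in> U}"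
    have "inv\<^bsub>add_monoid Xm\<^esub> x = (\<ominus>\<^bsub>T\<^esub> \<one>\<^bsub>T\<^esub>) \<odot>\<^bsub>Xm\<^esub> x"
      using x X_neg_smult by (simp add: a_inv_def)
    moreover have "iota ((\<ominus>\<^bsub>T\<^esub> \<one>\<^bsub>T\<^esub>) \<odot>\<^bsub>Xm\<^esub> x) \<in> U" using x by (intro sm) auto
    moreover have "(\<ominus>\<^bsub>T\<^esub> \<one>\<^bsub>T\<^esub>) \<odot>\<^bsub>Xm\<^esub> x \<in> carrier Xm" using x by (simp add: X_smult_closed)
    ultimately show "inv\<^bsub>add_monoid Xm\<^esub> x \<in> {x \<in> carrier Xm. iota x \<in> U}" by simp
  next
    fix a x assume a: "a \<in> carrier T" and x: "x \<in> {x \<in> carrier Xm. iota x \<in> U}"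
    then show "a \<odot>\<^bsub>Xm\<^esub> x \<in> {x \<in> carrier Xm. iota x \<in> U}"
      using sm by (simp add: X_smult_closed)
  qed
qed

lemma vanish:
  assumes U: "submodule U B Tens" and z: "{x \<in> carrier Xm. iota x \<in> U} = {\<zero>\<^bsub>Xm\<^esub>}"
  shows "U = {\<zero>\<^bsub>Tens\<^esub>}"
proof -
  note f = sm_facts[OF U]
  have "u = K" if u: "u \<in> U" for u
  proof -
    have "u \<in> carrier Tens" using u f(1) by blast
    then obtain c where c: "c \<in> carrier G" "u = K #>\<^bsub>G\<^esub> c" by (rule carrier_TensE)
    have "pj j c = \<zero>\<^bsub>Xm\<^esub>" if j: "j < n" for j
    proof -
      have "Em 0 j \<one>\<^bsub>T\<^esub> \<odot>\<^bsub>Tens\<^esub> u \<in> U" using j u by (intro f(4) Em_B) auto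
      then have "iota (pj j c) \<in> U" using E_smult_iota[OF j c(1)] c(2) by simp
      then have "pj j c \<in> {x \<in> carrier Xm. iota x \<in> U}" using pj_closed[OF c(1)] by simp
      then have "pj j c \<in> {\<zero>\<^bsub>Xm\<^esub>}" unfolding z .
      then show ?thesis by simp
    qed
    then have "c \<in> K" using c(1) by (intro decomp_K) auto
    then have "K #>\<^bsub>G\<^esub> c = K #>\<^bsub>G\<^esub> 0" by (intro coset_eq) simp
    then show "u = K" using c(2) by (simp add: coset_zero)
  qed
  then have "U \<subseteq> {K}" by blast
  then show ?thesis using f(2) unfolding Tens_zero by blast
qed

lemma indec_Tens:
  assumes ind: "indecomposable_module T Xm"
  shows "indecomposable_module B Tens"
  unfolding indecomposable_module_def
proof (intro conjI allI impI)
  show "left_module B Tens" by (rule left_module_Tens)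
next
  have "carrier Xm \<noteq> {\<zero>\<^bsub>Xm\<^esub>}" using ind by (simp add: indecomposable_module_def)
  then obtain x where x: "x \<in> carrier Xm" "x \<noteq> \<zero>\<^bsub>Xm\<^esub>" using X.zero_closed by blast
  have "iota x \<in> carrier Tens" using x by (simp add: iota_Tens)
  moreover have "iota x \<noteq> K" using iota_zero_iff x by blast
  ultimately show "carrier Tens \<noteq> {\<zero>\<^bsub>Tens\<^esub>}" by (auto simp: Tens_zero)
next
  fix U V
  assume a: "submodule U B Tens \<and> submodule V B Tens \<and> U \<inter> V = {\<zero>\<^bsub>Tens\<^esub>} \<and> U <+>\<^bsub>Tens\<^esub> V = carrier Tens"
  then have U: "submodule U B Tens" and V: "submodule V B Tens"
    and UV: "U \<inter> V = {K}" and sUV: "U <+>\<^bsub>Tens\<^esub> V = carrier Tens" by (auto simp: Tens_zero)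
  note fU = sm_facts[OF U] and fV = sm_facts[OF V]
  define U' where "U' = {x \<in> carrier Xm. iota x \<in> U}"
  define V' where "V' = {x \<in> carrier Xm. iota x \<in> V}"
  have U': "submodule U' T Xm" unfolding U'_def by (rule sub_prime[OF U])
  have V': "submodule V' T Xm" unfolding V'_def by (rule sub_prime[OF V])
  have int: "U' \<inter> V' = {\<zero>\<^bsub>Xm\<^esub>}"
  proof
    show "U' \<inter> V' \<subseteq> {\<zero>\<^bsub>Xm\<^esub>}"
    proof
      fix x assume "x \<in> U' \<inter> V'"
      then have x: "x \<in> carrier Xm" "iota x \<in> U" "iota x \<in> V" unfolding U'_def V'_def by auto
      then have "iota x \<in> U \<inter> V" by blast
      then have "iota x \<in> {K}" unfolding UV .
      then have "iota x = K" by simp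
      then show "x \<in> {\<zero>\<^bsub>Xm\<^esub>}" using iota_zero_iff x(1) by blast
    qed
    show "{\<zero>\<^bsub>Xm\<^esub>} \<subseteq> U' \<inter> V'" unfolding U'_def V'_def using fU(2) fV(2) by (simp add: iota_zero)
  qed
  have sum: "U' <+>\<^bsub>Xm\<^esub> V' = carrier Xm"
  proof
    show "U' <+>\<^bsub>Xm\<^esub> V' \<subseteq> carrier Xm"
      unfolding set_add_def' U'_def V'_def by auto
    show "carrier Xm \<subseteq> U' <+>\<^bsub>Xm\<^esub> V'"
    proof
      fix x assume x: "x \<in> carrier Xm"
      have "iota x \<in> U <+>\<^bsub>Tens\<^esub> V" using sUV iota_Tens[OF x] by simp
      then obtain u v where uv: "u \<in> U" "v \<in> V" "iota x = u \<oplus>\<^bsub>Tens\<^esub> v"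
        unfolding set_add_def' by blast
      have "u \<in> carrier Tens" using uv(1) fU(1) by blast
      then obtain cu where cu: "cu \<in> carrier G" "u = K #>\<^bsub>G\<^esub> cu" by (rule carrier_TensE)
      have "v \<in> carrier Tens" using uv(2) fV(1) by blast
      then obtain cv where cv: "cv \<in> carrier G" "v = K #>\<^bsub>G\<^esub> cv" by (rule carrier_TensE)
      have n0: "0 < n" using n1 by simp
      have eu: "Em 0 0 \<one>\<^bsub>T\<^esub> \<odot>\<^bsub>Tens\<^esub> u = iota (pj 0 cu)"
        unfolding cu(2) by (rule E_smult_iota[OF n0 cu(1)])
      have ev: "Em 0 0 \<one>\<^bsub>T\<^esub> \<odot>\<^bsub>Tens\<^esub> v = iota (pj 0 cv)"
        unfolding cv(2) by (rule E_smult_iota[OF n0 cv(1)])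
      have EB: "Em 0 0 \<one>\<^bsub>T\<^esub> \<in> carrier B" using n0 by (intro Em_B) auto
      have "iota (pj 0 cu) \<in> U" unfolding eu[symmetric] by (rule fU(4)[OF EB uv(1)])
      then have a: "pj 0 cu \<in> U'" unfolding U'_def using pj_closed[OF cu(1)] by blast
      have "iota (pj 0 cv) \<in> V" unfolding ev[symmetric] by (rule fV(4)[OF EB uv(2)])
      then have b: "pj 0 cv \<in> V'" unfolding V'_def using pj_closed[OF cv(1)] by blast
      have "K #>\<^bsub>G\<^esub> frag_of (eu 0 \<one>\<^bsub>T\<^esub>, x) = K #>\<^bsub>G\<^esub> (cu + cv)"
        using uv(3) unfolding cu(2) cv(2) iota_def add_coset .
      then have "frag_of (eu 0 \<one>\<^bsub>T\<^esub>, x) - (cu + cv) \<in> K" by (rule coset_eqD)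
      then have p0: "pj 0 (frag_of (eu 0 \<one>\<^bsub>T\<^esub>, x) - (cu + cv)) = \<zero>\<^bsub>Xm\<^esub>" by (rule pj_K)
      have fx: "frag_of (eu 0 \<one>\<^bsub>T\<^esub>, x) \<in> carrier G" using x by (intro G_frag e0_Mc)
      have "pj 0 (frag_of (eu 0 \<one>\<^bsub>T\<^esub>, x) - (cu + cv)) = x \<ominus>\<^bsub>Xm\<^esub> (pj 0 cu \<oplus>\<^bsub>Xm\<^esub> pj 0 cv)"
        unfolding pj_diff[OF fx G_add[OF cu(1) cv(1)]] pj_add[OF cu(1) cv(1)] pj_e0[OF x] ..
      then have "x \<ominus>\<^bsub>Xm\<^esub> (pj 0 cu \<oplus>\<^bsub>Xm\<^esub> pj 0 cv) = \<zero>\<^bsub>Xm\<^esub>" using p0 by simp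
      then have "x = pj 0 cu \<oplus>\<^bsub>Xm\<^esub> pj 0 cv"
        by (rule X_minus_zero[OF x X.a_closed[OF pj_closed[OF cu(1)] pj_closed[OF cv(1)]]])
      then show "x \<in> U' <+>\<^bsub>Xm\<^esub> V'" unfolding set_add_def' using a b by blast
    qed
  qed
  have H: "\<forall>U V. submodule U T Xm \<and> submodule V T Xm \<and> U \<inter> V = {\<zero>\<^bsub>Xm\<^esub>} \<and>
            U <+>\<^bsub>Xm\<^esub> V = carrier Xm \<longrightarrow> U = {\<zero>\<^bsub>Xm\<^esub>} \<or> V = {\<zero>\<^bsub>Xm\<^esub>}"
    using ind unfolding indecomposable_module_def by (rule conjunct2[OF conjunct2])
  have "U' = {\<zero>\<^bsub>Xm\<^esub>} \<or> V' = {\<zero>\<^bsub>Xm\<^esub>}"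
    using H[rule_format, OF conjI[OF U' conjI[OF V' conjI[OF int sum]]]] .
  then show "U = {\<zero>\<^bsub>Tens\<^esub>} \<or> V = {\<zero>\<^bsub>Tens\<^esub>}"
  proof (elim disjE)
    assume "U' = {\<zero>\<^bsub>Xm\<^esub>}"
    then have "U = {\<zero>\<^bsub>Tens\<^esub>}" by (intro vanish[OF U]) (simp only: U'_def)
    then show ?thesis by (rule disjI1)
  next
    assume "V' = {\<zero>\<^bsub>Xm\<^esub>}"
    then have "V = {\<zero>\<^bsub>Tens\<^esub>}" by (intro vanish[OF V]) (simp only: V'_def)
    then show ?thesis by (rule disjI2)
  qed
qed

end

theorem lemma4p3:
  fixes R :: "'r ring" and \<phi> :: "'r \<Rightarrow> 'a" and T :: "'a ring"
    and Xm :: "('a, 'x) module" and n :: nat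
  assumes "artin_algebra R \<phi> T"
    and "finitely_generated_module T Xm"
    and "indecomposable_module T Xm"
    and "n \<ge> 1"
  shows "indecomposable_module (upper_tri T n)
           (tensor T (column_module T n) (column_ract T) Xm)"
proof -
  have lm: "left_module T Xm" using assms(3) by (simp add: indecomposable_module_def)
  then have r: "ring T" and a: "abelian_group Xm" by (simp_all add: left_module_def)
  interpret tsetup T Xm n
    by (intro tsetup.intro tsetup_axioms.intro r a lm assms(4))
  show ?thesis by (rule indec_Tens[OF assms(3)])
qed

end
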